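(* Let $\mathcal{W}$ be an AVC. For any $\delta>0$, $\xi>0$ and $P\in\mathcal{P}(\mathcal{X})$ with $\min_xP(x)>0$, there exist $c$ sufficiently large and a function $E_1(\xi)$ with $E_1(\xi)>0$ for $\xi>0$ such that for every side information value $\mathcal{V}\in\mathcal{V}_c$, the set $T_P^c$ (used with all its elements as codewords) is a list-decodable code of blocklength $c$ for $\mathcal{W}$ under nosy maximal error, with $N$ messages and output-dependent list size $L(\mathbf{y}_1^c,\mathcal{V})$, where $$N=|T_P^c|\ge\exp\big(c(H(X)-\xi)\big),\qquad L(\mathbf{y}_1^c,\mathcal{V})\le\exp\Big(c\Big(\max_{V\in\mathcal{V}(\mathbf{y}_1^c,\delta)}H(X|Y)+\xi\Big)\Big),$$ and list-decoding error (probability that the transmitted codeword is not in the output list, for side information containing the true average channel) $\varepsilon_L\le\exp(-c\,E_1(\xi))$. Here $H(X)$ is computed under $P$ and, for $V\in\mathcal{V}(\mathbf{y}_1^c,\delta)$, $H(X|Y)$ is computed under the joint distribution $P(x)V(y|x)$.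
   Context: AVC: $\mathcal{W}=\{W(y|x,s):s\in\mathcal{S}\}$ with finite $\mathcal{X},\mathcal{S},\mathcal{Y}$, $W(\mathbf{y}|\mathbf{x},\mathbf{s})=\prod_iW(y_i|x_i,s_i)$; under nosy noise the state sequence may be any function of the transmitted codeword. $T_P^c\subset\mathcal{X}^c$ is the set of sequences of type $P$. For a chunk $\mathbf{x}\in\mathcal{X}^c$ and states $\mathbf{s}$, the average channel is $V(y|x)=\frac{1}{N(x|\mathbf{x})}\sum_{t=1}^cW(y|x_t,s_t)\mathbf{1}(x_t=x)$. The decoder is given a set $\mathcal{V}$ of channels containing this average channel, from a finite family $\mathcal{V}_c$ with $|\mathcal{V}_c|\le c^v$, $v<\infty$ fixed. For an output $\mathbf{y}_1^c$, $\mathcal{V}(\mathbf{y}_1^c,\delta)=\{V\in\mathcal{V}:\ d_{TV}(T_{\mathbf{y}_1^c},\sum_xP(x)V(\cdot|x))<\delta\}$, where $T_{\mathbf{y}_1^c}$ is the empirical distribution (type) of $\mathbf{y}_1^c$ and $d_{TV}$ is total variation distance. A list-decodable code outputs, for each received sequence and side information, a list of messages; its error is the maximum over messages and jammer strategies of the probability that the transmitted message is not in the list. *)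

theory Defs
  imports Complex_Main
begin

definition avc :: "('x::finite \<Rightarrow> 's::finite \<Rightarrow> 'y::finite \<Rightarrow> real) \<Rightarrow> bool" where
  "avc W \<longleftrightarrow> (\<forall>x s y. W x s y \<ge> 0) \<and> (\<forall>x s. (\<Sum>y\<in>UNIV. W x s y) = 1)"

definition stoch :: "('x::finite \<Rightarrow> 'y::finite \<Rightarrow> real) \<Rightarrow> bool" where
  "stoch V \<longleftrightarrow> (\<forall>x y. V x y \<ge> 0) \<and> (\<forall>x. (\<Sum>y\<in>UNIV. V x y) = 1)"

definition typ_class :: "('x \<Rightarrow> real) \<Rightarrow> nat \<Rightarrow> 'x list set" where
  "typ_class P c = {xs. length xs = c \<and> (\<forall>a. real (count_list xs a) = real c * P a)}"

definition avg_channel ::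
  "('x \<Rightarrow> 's \<Rightarrow> 'y \<Rightarrow> real) \<Rightarrow> 'x list \<Rightarrow> 's list \<Rightarrow> 'x \<Rightarrow> 'y \<Rightarrow> real" where
  "avg_channel W xs ss = (\<lambda>a b.
     (\<Sum>t<length xs. if xs ! t = a then W a (ss ! t) b else 0) / real (count_list xs a))"

definition emp_dist :: "'y list \<Rightarrow> 'y \<Rightarrow> real" where
  "emp_dist ys = (\<lambda>b. real (count_list ys b) / real (length ys))"

definition tv_dist :: "('y::finite \<Rightarrow> real) \<Rightarrow> ('y \<Rightarrow> real) \<Rightarrow> real" where
  "tv_dist p q = (1/2) * (\<Sum>b\<in>UNIV. \<bar>p b - q b\<bar>)"

definition out_marg :: "('x::finite \<Rightarrow> real) \<Rightarrow> ('x \<Rightarrow> 'y \<Rightarrow> real) \<Rightarrow> 'y \<Rightarrow> real" where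
  "out_marg P V = (\<lambda>b. \<Sum>a\<in>UNIV. P a * V a b)"

definition Vset ::
  "('x::finite \<Rightarrow> 'y::finite \<Rightarrow> real) set \<Rightarrow> ('x \<Rightarrow> real) \<Rightarrow> 'y list \<Rightarrow> real \<Rightarrow> ('x \<Rightarrow> 'y \<Rightarrow> real) set" where
  "Vset \<V> P ys \<delta> = {V \<in> \<V>. tv_dist (emp_dist ys) (out_marg P V) < \<delta>}"

text \<open>Entropies in nats, with the convention 0 log 0 = 0.\<close>
definition entropy :: "('x::finite \<Rightarrow> real) \<Rightarrow> real" where
  "entropy P = - (\<Sum>a\<in>UNIV. if P a > 0 then P a * ln (P a) else 0)"

definition cond_entropy :: "('x::finite \<Rightarrow> real) \<Rightarrow> ('x \<Rightarrow> 'y::finite \<Rightarrow> real) \<Rightarrow> real" where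
  "cond_entropy P V = - (\<Sum>a\<in>UNIV. \<Sum>b\<in>UNIV.
      if P a * V a b > 0 then P a * V a b * ln (P a * V a b / out_marg P V b) else 0)"

definition chan_prob ::
  "('x \<Rightarrow> 's \<Rightarrow> 'y \<Rightarrow> real) \<Rightarrow> 'x list \<Rightarrow> 's list \<Rightarrow> 'y list \<Rightarrow> real" where
  "chan_prob W xs ss ys = (\<Prod>t<length xs. W (xs ! t) (ss ! t) (ys ! t))"

definition list_err ::
  "('x \<Rightarrow> 's \<Rightarrow> 'y \<Rightarrow> real) \<Rightarrow> ('y list \<Rightarrow> 'x list set) \<Rightarrow> 'x list \<Rightarrow> 's list \<Rightarrow> real" where
  "list_err W Dec xs ss =
     (\<Sum>ys\<in>{ys. length ys = length xs \<and> xs \<notin> Dec ys}. chan_prob W xs ss ys)"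

end

theory Submission
  imports Defs "HOL-Combinatorics.Multiset_Permutations" "HOL-Library.FuncSet"
begin


lemma exp_le_quad:
  fixes x :: real assumes "-1 \<le> x" "x \<le> 1" shows "exp x \<le> 1 + x + x\<^sup>2"
proof (cases "x \<ge> 0")
  case True thus ?thesis using exp_bound assms by auto
next
  case False
  define y where "y = -x"
  have y: "0 \<le> y" "y \<le> 1" using False assms y_def by auto
  have "1 + y/2 \<le> exp (y/2)" by (rule exp_ge_add_one_self)
  hence "(1 + y/2)^2 \<le> exp (y/2) ^2" using y by (intro power_mono) auto
  also have "exp (y/2) ^2 = exp y" by (simp add: power2_eq_square flip: exp_add)
  finally have e: "(1+y/2)^2 \<le> exp y" .
  have pos: "0 < (1+y/2)^2" using y by auto
  have "(1 - y + y^2) * (1+y/2)^2 \<ge> 1"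
  proof -
    have "(1 - y + y^2) * (1+y/2)^2 = 1 + y^2/4 + 3*y^3/4 + y^4/4" unfolding power2_eq_square power3_eq_cube power4_eq_xxxx by (simp add: field_simps)
    thus ?thesis using y by simp
  qed
  hence "1 / (1+y/2)^2 \<le> 1 - y + y^2" using pos by (simp add: divide_simps)
  moreover have "exp x = 1 / exp y" using y_def by (simp add: exp_minus field_simps)
  moreover have "1 / exp y \<le> 1 / (1+y/2)^2" using e pos by (intro divide_left_mono) auto
  ultimately show ?thesis using y_def by simp
qed

lemma sum_lists_prod:
  fixes f :: "nat \<Rightarrow> 'a::finite \<Rightarrow> real"
  shows "(\<Sum>xs\<in>{xs. length xs = n}. \<Prod>t<n. f t (xs!t)) = (\<Prod>t<n. \<Sum>a\<in>UNIV. f t a)"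
proof (induction n arbitrary: f)
  case 0 thus ?case by simp
next
  case (Suc n)
  have eq: "{xs::'a list. length xs = Suc n} = (\<lambda>(a,xs). a#xs) ` (UNIV \<times> {xs. length xs = n})"
    by (auto simp: length_Suc_conv image_iff)
  have inj: "inj_on (\<lambda>(a,xs). a#xs) (UNIV \<times> {xs::'a list. length xs = n})"
    by (auto simp: inj_on_def)
  have "(\<Sum>xs\<in>{xs. length xs = Suc n}. \<Prod>t<Suc n. f t (xs!t))
      = (\<Sum>(a,xs)\<in>UNIV \<times> {xs. length xs = n}. \<Prod>t<Suc n. f t ((a#xs)!t))"
    unfolding eq by (subst sum.reindex[OF inj]) (simp add: case_prod_unfold)
  also have "\<dots> = (\<Sum>(a,xs)\<in>UNIV \<times> {xs. length xs = n}. f 0 a * (\<Prod>t<n. f (Suc t) (xs!t)))"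
    by (intro sum.cong refl) (auto simp only: prod.lessThan_Suc_shift split: prod.splits, simp)
  also have "\<dots> = (\<Sum>a\<in>UNIV. \<Sum>xs\<in>{xs. length xs = n}. f 0 a * (\<Prod>t<n. f (Suc t) (xs!t)))"
    by (subst sum.cartesian_product) simp
  also have "\<dots> = (\<Sum>a\<in>UNIV. f 0 a) * (\<Prod>t<n. \<Sum>a\<in>UNIV. f (Suc t) a)"
  proof -
    have "\<And>a. (\<Sum>xs\<in>{xs. length xs = n}. f 0 a * (\<Prod>t<n. f (Suc t) (xs!t)))
        = f 0 a * (\<Prod>t<n. \<Sum>a\<in>UNIV. f (Suc t) a)"
      by (simp add: sum_distrib_left[symmetric] Suc.IH[of "\<lambda>t. f (Suc t)"])
    thus ?thesis by (simp add: sum_distrib_right)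
  qed
  also have "\<dots> = (\<Prod>t<Suc n. \<Sum>a\<in>UNIV. f t a)"
    by (simp only: prod.lessThan_Suc_shift)
  finally show ?case .
qed

lemma sum_fiber:
  fixes g :: "nat \<Rightarrow> 'z::finite" and h :: "'z \<Rightarrow> real"
  shows "(\<Sum>t<n. h (g t)) = (\<Sum>z\<in>UNIV. real (card {t. t<n \<and> g t = z}) * h z)"
proof -
  have "(\<Sum>t<n. h (g t)) = (\<Sum>z\<in>UNIV. \<Sum>t\<in>{t. t \<in> {..<n} \<and> g t = z}. h (g t))"
    by (rule sum.group[symmetric]) auto
  also have "\<dots> = (\<Sum>z\<in>UNIV. real (card {t. t<n \<and> g t = z}) * h z)"
    by (intro sum.cong refl) simp
  finally show ?thesis .
qed

lemma count_list_card: "count_list xs a = card {t. t < length xs \<and> xs!t = a}"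
  by (simp add: count_list_eq_length_filter length_filter_conv_card eq_commute)

lemma sum_count_list:
  fixes xs :: "'a::finite list" and h :: "'a \<Rightarrow> real"
  shows "(\<Sum>t<length xs. h (xs!t)) = (\<Sum>a\<in>UNIV. real (count_list xs a) * h a)"
  by (simp add: sum_fiber count_list_card)




lemma finite_len: "finite {xs::'a::finite list. length xs = n}"
  using finite_lists_length_eq[of "UNIV::'a set" n] by simp

lemma mgf_factor:
  fixes p g :: "'y::finite \<Rightarrow> real"
  assumes p0: "\<And>b. p b \<ge> 0" and p1: "(\<Sum>b\<in>UNIV. p b) = 1"
    and gR: "\<And>b. \<bar>g b - m\<bar> \<le> R" and m: "m = (\<Sum>b\<in>UNIV. p b * g b)"
    and s: "s \<ge> 0" "s * R \<le> 1"
  shows "(\<Sum>b\<in>UNIV. p b * exp (s * (g b - m))) \<le> exp (s^2 * R^2)"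
proof -
  have "R \<ge> 0" using gR[of undefined] by linarith
  have u: "\<bar>s * (g b - m)\<bar> \<le> s * R" for b
    using gR[of b] s by (simp add: abs_mult mult_left_mono)
  have "(\<Sum>b\<in>UNIV. p b * exp (s * (g b - m))) \<le>
        (\<Sum>b\<in>UNIV. p b * (1 + s * (g b - m) + (s * R)^2))"
  proof (intro sum_mono mult_left_mono p0)
    fix b
    have ub: "\<bar>s * (g b - m)\<bar> \<le> 1" using u[of b] s(2) by linarith
    have "exp (s * (g b - m)) \<le> 1 + s * (g b - m) + (s * (g b - m))^2"
      using ub by (intro exp_le_quad) (simp_all add: abs_le_iff)
    also have "(s * (g b - m))^2 \<le> (s*R)^2"
    proof -
      have "\<bar>s * (g b - m)\<bar> \<le> \<bar>s*R\<bar>" using u[of b] s \<open>R \<ge> 0\<close> by simp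
      thus ?thesis by (simp only: abs_le_square_iff)
    qed
    finally show "exp (s * (g b - m)) \<le> 1 + s * (g b - m) + (s * R)^2" by simp
  qed
  also have "\<dots> = (\<Sum>b\<in>UNIV. p b) + s * ((\<Sum>b\<in>UNIV. p b * g b) - m * (\<Sum>b\<in>UNIV. p b)) + (s*R)^2 * (\<Sum>b\<in>UNIV. p b)"
    by (simp add: algebra_simps sum.distrib sum_distrib_left sum_distrib_right sum_subtractf)
  also have "\<dots> = 1 + (s*R)^2" using p1 m by simp
  also have "\<dots> \<le> exp ((s*R)^2)" by (rule exp_ge_add_one_self)
  finally show ?thesis by (simp add: power_mult_distrib)
qed

lemma chernoff:
  fixes p g :: "nat \<Rightarrow> 'y::finite \<Rightarrow> real" and n :: nat and \<eta> R :: real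
  assumes p0: "\<And>t b. t<n \<Longrightarrow> p t b \<ge> 0" and p1: "\<And>t. t<n \<Longrightarrow> (\<Sum>b\<in>UNIV. p t b) = 1"
    and gR: "\<And>t b. t<n \<Longrightarrow> \<bar>g t b - (\<Sum>b'\<in>UNIV. p t b' * g t b')\<bar> \<le> R"
    and R: "R > 0" and eta: "\<eta> > 0" "\<eta> \<le> 2*R"
  shows "(\<Sum>ys\<in>{ys. length ys = n \<and> (\<Sum>t<n. \<Sum>b\<in>UNIV. p t b * g t b) + n*\<eta> \<le> (\<Sum>t<n. g t (ys!t))}.
            \<Prod>t<n. p t (ys!t)) \<le> exp (-(n*\<eta>^2/(4*R^2)))"
proof -
  define m where "m t = (\<Sum>b\<in>UNIV. p t b * g t b)" for t
  define s where "s = \<eta>/(2*R^2)"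
  have s0: "s \<ge> 0" using R eta by (simp add: s_def)
  have sR: "s * R \<le> 1" using R eta by (simp add: s_def power2_eq_square field_simps)
  let ?S = "{ys. length ys = n \<and> (\<Sum>t<n. \<Sum>b\<in>UNIV. p t b * g t b) + n*\<eta> \<le> (\<Sum>t<n. g t (ys!t))}"
  let ?A = "{ys::'y list. length ys = n}"
  let ?F = "\<lambda>ys. exp (- (s*n*\<eta>)) * (\<Prod>t<n. p t (ys!t) * exp (s * (g t (ys!t) - m t)))"
  have pp: "ys \<in> ?A \<Longrightarrow> (\<Prod>t<n. p t (ys!t)) \<ge> 0" for ys by (intro prod_nonneg) (auto intro: p0)
  have F: "?F ys = (\<Prod>t<n. p t (ys!t)) * exp (s * ((\<Sum>t<n. g t (ys!t)) - (\<Sum>t<n. m t) - n*\<eta>))" for ys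
  proof -
    have 1: "(\<Prod>t<n. p t (ys!t) * exp (s * (g t (ys!t) - m t))) = (\<Prod>t<n. p t (ys!t)) * exp (\<Sum>t<n. s * (g t (ys!t) - m t))"
      by (simp add: prod.distrib exp_sum)
    have 2: "(\<Sum>t<n. s * (g t (ys!t) - m t)) = s * ((\<Sum>t<n. g t (ys!t)) - (\<Sum>t<n. m t))"
      by (simp add: sum_distrib_left[symmetric] sum_subtractf)
    have 3: "exp (- (s*n*\<eta>)) * exp (s * ((\<Sum>t<n. g t (ys!t)) - (\<Sum>t<n. m t))) = exp (s * ((\<Sum>t<n. g t (ys!t)) - (\<Sum>t<n. m t) - n*\<eta>))"
      by (rule trans[OF exp_add[symmetric]], rule arg_cong[where f=exp], simp add: algebra_simps)
    show ?thesis unfolding 1 2 3[symmetric] by (simp only: ac_simps)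
  qed
  have "(\<Sum>ys\<in>?S. \<Prod>t<n. p t (ys!t)) \<le> (\<Sum>ys\<in>?S. ?F ys)"
  proof (intro sum_mono)
    fix ys assume ys: "ys \<in> ?S"
    hence "(\<Sum>t<n. g t (ys!t)) - (\<Sum>t<n. m t) - n*\<eta> \<ge> 0" by (simp add: m_def)
    hence "1 \<le> exp (s * ((\<Sum>t<n. g t (ys!t)) - (\<Sum>t<n. m t) - n*\<eta>))" using s0 by simp
    hence "(\<Prod>t<n. p t (ys!t)) * 1 \<le> ?F ys" unfolding F using pp[of ys] ys
      by (intro mult_left_mono) auto
    thus "(\<Prod>t<n. p t (ys!t)) \<le> ?F ys" by simp
  qed
  also have "\<dots> \<le> (\<Sum>ys\<in>?A. ?F ys)"
    by (intro sum_mono2 finite_len) (auto intro!: mult_nonneg_nonneg prod_nonneg p0)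
  also have "\<dots> = exp (- (s*n*\<eta>)) * (\<Prod>t<n. \<Sum>b\<in>UNIV. p t b * exp (s * (g t b - m t)))"
    by (simp add: sum_distrib_left[symmetric] sum_lists_prod[of "\<lambda>t b. p t b * exp (s * (g t b - m t))"])
  also have "\<dots> \<le> exp (- (s*n*\<eta>)) * (\<Prod>t<n. exp (s^2 * R^2))"
    by (intro mult_left_mono prod_mono conjI sum_nonneg mgf_factor[OF _ _ _ _ s0 sR])
       (auto intro!: mult_nonneg_nonneg p0 p1 gR simp: m_def)
  also have "\<dots> = exp (n * (s^2*R^2) - s*n*\<eta>)"
  proof -
    have "(\<Prod>t<n. exp (s^2 * R^2)) = exp (n * (s^2*R^2))" by (simp add: exp_of_nat_mult)
    thus ?thesis by (simp add: mult_exp_exp)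
  qed
  also have "n * (s^2*R^2) - s*n*\<eta> = -(n*\<eta>^2/(4*R^2))"
  proof -
    have a: "s^2*R^2 = \<eta>^2/(4*R^2)" using R unfolding s_def by (simp add: power2_eq_square)
    have b: "s*\<eta> = 2 * (\<eta>^2/(4*R^2))" using R unfolding s_def by (simp add: power2_eq_square)
    have c: "s*n*\<eta> = n * (2*(\<eta>^2/(4*R^2)))" using b by (metis mult.commute mult.left_commute)
    have d: "\<And>X::real. n*X - n*(2*X) = -(n*X)" by algebra
    show ?thesis unfolding a c d by simp
  qed
  finally show ?thesis .
qed




lemma pow_fact_le_exp: "(x::real) \<ge> 0 \<Longrightarrow> x^n / fact n \<le> exp x"
proof -
  assume x: "x \<ge> 0"
  have su: "(\<lambda>k. x^k / fact k) sums exp x" using exp_converges[of x] by (simp add: divide_inverse ac_simps)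
  have "(\<Sum>k\<in>{n}. x^k / fact k) \<le> (\<Sum>k. x^k / fact k)"
    by (rule sum_le_suminf[OF sums_summable[OF su]]) (use x in auto)
  thus ?thesis using sums_unique[OF su] by simp
qed

lemma fact_lower: "real n ^ n / exp (real n) \<le> fact n"
  using pow_fact_le_exp[of "real n" n] by (simp add: field_simps)

lemma e_le_ratio: "exp 1 * (real n + 1) ^ (n+2) \<le> (real n + 2) ^ (n+2)"
proof -
  define y where "y = 1 / (real n + 2)"
  have y: "0 < y" "y < 1" by (auto simp: y_def)
  have "1 - y \<le> exp (-y)" using exp_ge_add_one_self[of "-y"] by simp
  hence "(1 - y)^(n+2) \<le> exp (-y) ^ (n+2)" using y by (intro power_mono) auto
  also have "exp (-y) ^ (n+2) = exp (real (n+2) * (-y))"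
    by (rule exp_of_nat_mult[symmetric])
  also have "real (n+2) * (-y) = -1" by (simp add: y_def)
  finally have a: "(1 - y)^(n+2) \<le> exp (-1)" .
  have "1 - y = (real n + 1) / (real n + 2)" by (simp add: y_def field_simps)
  hence "((real n + 1) / (real n + 2))^(n+2) \<le> exp (-1)" using a by simp
  hence "(real n + 1)^(n+2) \<le> exp (-1) * (real n + 2)^(n+2)"
    by (simp add: power_divide divide_le_eq)
  hence "exp 1 * (real n + 1)^(n+2) \<le> exp 1 * (exp (-1) * (real n + 2)^(n+2))"
    by (intro mult_left_mono) auto
  also have "\<dots> = (real n + 2)^(n+2)" by (simp add: mult.assoc[symmetric] exp_minus)
  finally show ?thesis .
qed

lemma fact_upper: "fact n \<le> (real n + 1) ^ (n+1) / exp (real n)"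
proof (induction n)
  case 0 thus ?case by simp
next
  case (Suc n)
  have "fact (Suc n) = (real n + 1) * fact n" by simp
  also have "\<dots> \<le> (real n + 1) * ((real n + 1) ^ (n+1) / exp (real n))"
    by (intro mult_left_mono Suc.IH) auto
  also have "\<dots> = (real n + 1)^(n+2) / exp (real n)" by simp
  also have "\<dots> = exp 1 * (real n + 1)^(n+2) / exp (real n + 1)"
    by (simp add: exp_add)
  also have "\<dots> \<le> (real n + 2)^(n+2) / exp (real n + 1)"
    using e_le_ratio[of n] by (intro divide_right_mono) auto
  finally show ?case by (simp add: add.commute)
qed

lemma pow_succ_le: "n \<ge> 1 \<Longrightarrow> (real n + 1) ^ n \<le> exp 1 * real n ^ n"
proof -
  assume n: "n \<ge> 1"
  have "1 + 1 / real n \<le> exp (1 / real n)" by (rule exp_ge_add_one_self)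
  hence "(1 + 1 / real n)^n \<le> exp (1 / real n) ^ n" by (intro power_mono) auto
  also have "\<dots> = exp 1" using n by (simp add: exp_of_nat_mult[symmetric])
  finally have "(1 + 1 / real n)^n \<le> exp 1" .
  moreover have "(1 + 1 / real n)^n = (real n + 1)^n / real n ^ n"
    using n by (simp add: field_simps power_divide)
  ultimately show ?thesis using n by (simp add: divide_le_eq)
qed

lemma fact_upper2: "n \<ge> 1 \<Longrightarrow> fact n \<le> exp 1 * (real n + 1) * real n ^ n / exp (real n)"
proof -
  assume n: "n \<ge> 1"
  have "fact n \<le> (real n + 1) ^ (n+1) / exp (real n)" by (rule fact_upper)
  also have "(real n + 1) ^ (n+1) = (real n + 1) * (real n + 1)^n" by simp
  also have "\<dots> \<le> (real n + 1) * (exp 1 * real n ^ n)"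
    by (intro mult_left_mono pow_succ_le n) auto
  finally show ?thesis by (simp add: divide_right_mono mult.assoc mult.left_commute)
qed




lemma typ_class_card:
  fixes P :: "'x::finite \<Rightarrow> real" and n :: "'x \<Rightarrow> nat"
  assumes n: "\<And>a. real (n a) = real c * P a" and pos: "\<And>a. n a > 0" and sn: "(\<Sum>a\<in>UNIV. n a) = c"
  shows "real (card (typ_class P c)) * (\<Prod>a\<in>UNIV. fact (n a)) = fact c"
proof -
  define M where "M = (\<Sum>a\<in>UNIV. replicate_mset (n a) a)"
  have cM: "count M a = n a" for a
    by (simp add: M_def count_sum)
  have sM: "set_mset M = UNIV"
  proof -
    have "x \<in># M" for x using pos[of x] cM[of x] count_greater_zero_iff[of M x] by simp
    thus ?thesis by auto
  qed
  have szM: "size M = c" using sn by (simp add: size_multiset_overloaded_eq sM cM)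
  have T: "typ_class P c = permutations_of_multiset M"
  proof (intro set_eqI iffI)
    fix xs assume xs: "xs \<in> typ_class P c"
    have "count (mset xs) a = count M a" for a
    proof -
      have "real (count_list xs a) = real (n a)" using xs n by (simp add: typ_class_def)
      thus ?thesis by (simp add: count_mset cM)
    qed
    thus "xs \<in> permutations_of_multiset M"
      by (simp add: permutations_of_multiset_def multiset_eqI)
  next
    fix xs assume "xs \<in> permutations_of_multiset M"
    hence m: "mset xs = M" by (simp add: permutations_of_multiset_def)
    have "length xs = c" using szM m by (metis size_mset)
    moreover have "real (count_list xs a) = real c * P a" for a
      using m n[of a] cM[of a] by (simp add: count_mset[symmetric])
    ultimately show "xs \<in> typ_class P c" by (simp add: typ_class_def)
  qed
  have "card (permutations_of_multiset M) * (\<Prod>x\<in>set_mset M. fact (count M x)) = fact (size M)"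
    by (rule card_permutations_of_multiset_aux)
  hence "card (typ_class P c) * (\<Prod>a\<in>UNIV. fact (n a)) = (fact c :: nat)"
    by (simp add: T sM cM szM)
  hence "real (card (typ_class P c) * (\<Prod>a\<in>UNIV. fact (n a))) = real (fact c :: nat)" by simp
  thus ?thesis by (simp add: of_nat_fact)
qed

lemma typ_class_lower:
  fixes P :: "'x::finite \<Rightarrow> real"
  assumes P: "\<And>a. P a > 0" "(\<Sum>a\<in>UNIV. P a) = 1" and c: "c \<ge> 1" and N: "\<And>a. real c * P a \<in> \<nat>"
  shows "real (card (typ_class P c)) \<ge> exp (real c * entropy P) / (exp 1 * (real c + 1)) ^ card (UNIV::'x set)"
proof -
  have "\<forall>a. \<exists>m::nat. real m = real c * P a"
  proof
    fix a show "\<exists>m::nat. real m = real c * P a" using N[of a] by (auto elim!: Nats_cases)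
  qed
  then obtain n where n: "\<And>a. real (n a) = real c * P a"
    by (auto dest!: choice)
  have pos: "n a > 0" for a
  proof -
    have "real c * P a > 0" using P(1)[of a] c by simp
    hence "real (n a) > 0" using n[of a] by simp
    thus ?thesis by simp
  qed
  have sn: "(\<Sum>a\<in>UNIV. n a) = c"
  proof -
    have "real (\<Sum>a\<in>UNIV. n a) = (\<Sum>a\<in>UNIV. real (n a))" by (rule of_nat_sum)
    also have "\<dots> = (\<Sum>a\<in>UNIV. real c * P a)" using n by (intro sum.cong) auto
    also have "\<dots> = real c * (\<Sum>a\<in>UNIV. P a)" by (rule sum_distrib_left[symmetric])
    finally have "real (\<Sum>a\<in>UNIV. n a) = real c * (\<Sum>a\<in>UNIV. P a)" .
    hence "real (\<Sum>a\<in>UNIV. n a) = real c" unfolding P(2) by (simp only: mult_1_right)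
    thus ?thesis by (simp only: of_nat_eq_iff)
  qed
  have nle: "n a \<le> c" for a
    using sn member_le_sum[of a UNIV n] by auto
  define K where "K = card (UNIV::'x set)"
  define A where "A = exp 1 * (real c + 1)"
  have A0: "A > 0" by (simp add: A_def)
  have cardeq: "real (card (typ_class P c)) * (\<Prod>a\<in>UNIV. fact (n a)) = fact c"
    by (rule typ_class_card[OF n pos sn])
  have fn: "fact (n a) \<le> A * exp (real (n a) * ln (real (n a))) * exp (- real (n a))" for a
  proof -
    have "fact (n a) \<le> exp 1 * (real (n a) + 1) * real (n a) ^ (n a) / exp (real (n a))"
      using pos[of a] by (intro fact_upper2) simp
    also have "real (n a) ^ (n a) = exp (real (n a) * ln (real (n a)))"
      using pos[of a] by (simp add: exp_of_nat_mult)
    also have "exp 1 * (real (n a) + 1) * exp (real (n a) * ln (real (n a))) / exp (real (n a))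
        \<le> A * exp (real (n a) * ln (real (n a))) * exp (- real (n a))"
      using nle[of a] by (simp add: A_def exp_minus divide_inverse mult_right_mono)
    finally show ?thesis .
  qed
  have "(\<Prod>a\<in>UNIV. fact (n a)) \<le> (\<Prod>a\<in>UNIV. A * exp (real (n a) * ln (real (n a))) * exp (- real (n a)))"
    by (intro prod_mono conjI fn) auto
  also have "\<dots> = A ^ K * exp (\<Sum>a\<in>UNIV. real (n a) * ln (real (n a))) * exp (- real c)"
  proof -
    have "exp (- real c) = (\<Prod>a\<in>UNIV. exp (- real (n a)))"
      using sn by (simp add: exp_sum[symmetric] sum_negf flip: of_nat_sum)
    thus ?thesis by (simp add: prod.distrib exp_sum K_def)
  qed
  finally have pr: "(\<Prod>a\<in>UNIV. fact (n a)) \<le> A ^ K * exp (\<Sum>a\<in>UNIV. real (n a) * ln (real (n a))) * exp (- real c)" .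
  have ppos: "(\<Prod>a\<in>UNIV. fact (n a) :: real) > 0" by (intro prod_pos) auto
  have fc: "real c ^ c / exp (real c) \<le> fact c" by (rule fact_lower)
  have cc: "real c ^ c = exp (real c * ln (real c))" using c by (simp add: exp_of_nat_mult)
  have ent: "real c * ln (real c) - (\<Sum>a\<in>UNIV. real (n a) * ln (real (n a))) = real c * entropy P"
  proof -
    have "(\<Sum>a\<in>UNIV. real (n a) * ln (real (n a))) = (\<Sum>a\<in>UNIV. real c * P a * (ln (real c) + ln (P a)))"
      using c P(1) by (intro sum.cong refl) (simp add: n ln_mult)
    also have "\<dots> = real c * ln (real c) * (\<Sum>a\<in>UNIV. P a) + real c * (\<Sum>a\<in>UNIV. P a * ln (P a))"
      by (simp add: algebra_simps sum.distrib sum_distrib_left sum_distrib_right)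
    finally show ?thesis using P by (simp add: entropy_def)
  qed
  have "exp (real c * entropy P) / A ^ K = (exp (real c * ln (real c)) / exp (real c)) / (A ^ K * exp (\<Sum>a\<in>UNIV. real (n a) * ln (real (n a))) * exp (- real c))"
    unfolding ent[symmetric] by (simp add: exp_diff exp_minus field_simps)
  also have "\<dots> \<le> fact c / (\<Prod>a\<in>UNIV. fact (n a))"
    using fc cc pr ppos A0 by (intro frac_le) auto
  also have "\<dots> = real (card (typ_class P c))" using cardeq ppos by (simp add: field_simps)
  finally show ?thesis by (simp add: A_def K_def)
qed




definition smooth :: "real \<Rightarrow> ('x \<Rightarrow> 'y::finite \<Rightarrow> real) \<Rightarrow> 'x \<Rightarrow> 'y \<Rightarrow> real" where
  "smooth l V a b = (1 - l) * V a b + l / real (card (UNIV::'y set))"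

definition ell :: "real \<Rightarrow> ('x::finite \<Rightarrow> real) \<Rightarrow> ('x \<Rightarrow> 'y::finite \<Rightarrow> real) \<Rightarrow> real" where
  "ell l P V = (\<Sum>a\<in>UNIV. \<Sum>b\<in>UNIV. P a * V a b * ln (smooth l V a b))"

lemma stoch_le1: "stoch V \<Longrightarrow> V a b \<le> 1"
proof -
  assume s: "stoch V"
  have "V a b \<le> (\<Sum>b\<in>UNIV. V a b)" using s by (intro member_le_sum) (auto simp: stoch_def)
  thus ?thesis using s by (simp add: stoch_def)
qed

lemma smooth_bounds:
  assumes "stoch V" "0 < l" "l < 1"
  shows "l / real (card (UNIV::'y set)) \<le> smooth l V a (b::'y::finite)" "smooth l V a b \<le> 1" "smooth l V a b > 0"
proof -
  have Q: "real (card (UNIV::'y set)) \<ge> 1" using card_gt_0_iff[of "UNIV::'y set"] by simp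
  have v: "0 \<le> V a b" "V a b \<le> 1" using assms stoch_le1 by (auto simp: stoch_def)
  show 1: "l / real (card (UNIV::'y set)) \<le> smooth l V a b" using v assms by (simp add: smooth_def)
  have "l / real (card (UNIV::'y set)) \<le> l" using Q assms by (simp add: divide_le_eq)
  moreover have "(1 - l) * V a b \<le> (1 - l) * 1" using v assms by (intro mult_left_mono) auto
  ultimately show "smooth l V a b \<le> 1" by (simp add: smooth_def)
  have "l / real (card (UNIV::'y set)) > 0" using Q assms by simp
  thus "smooth l V a b > 0" using 1 by linarith
qed

lemma out_marg_smooth:
  fixes V :: "'x::finite \<Rightarrow> 'y::finite \<Rightarrow> real"
  assumes "(\<Sum>a\<in>UNIV. P a) = 1"
  shows "out_marg P (smooth l V) b = (1 - l) * out_marg P V b + l / real (card (UNIV::'y::finite set))"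
proof -
  let ?Q = "real (card (UNIV::'y set))"
  have "out_marg P (smooth l V) b = (\<Sum>a\<in>UNIV. (1-l) * (P a * V a b) + (l/?Q) * P a)"
    unfolding out_marg_def smooth_def by (intro sum.cong) (simp_all add: algebra_simps)
  also have "\<dots> = (1-l) * (\<Sum>a\<in>UNIV. P a * V a b) + (l/?Q) * (\<Sum>a\<in>UNIV. P a)"
    by (simp add: sum.distrib sum_distrib_left)
  finally show ?thesis using assms by (simp add: out_marg_def)
qed

lemma out_marg_bounds:
  assumes "stoch V" "\<And>a. P a \<ge> 0" "(\<Sum>a\<in>UNIV. P a) = 1"
  shows "0 \<le> out_marg P V b" "out_marg P V b \<le> 1" "(\<Sum>b\<in>UNIV. out_marg P V b) = 1"
proof -
  show "0 \<le> out_marg P V b" using assms by (auto simp: out_marg_def stoch_def intro!: sum_nonneg)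
  have "out_marg P V b \<le> (\<Sum>a\<in>UNIV. P a * 1)" unfolding out_marg_def
    using assms stoch_le1 by (intro sum_mono mult_left_mono) auto
  thus "out_marg P V b \<le> 1" using assms by simp
  have "(\<Sum>b\<in>UNIV. out_marg P V b) = (\<Sum>a\<in>UNIV. P a * (\<Sum>b\<in>UNIV. V a b))"
    unfolding out_marg_def by (subst sum.swap) (simp add: sum_distrib_left)
  thus "(\<Sum>b\<in>UNIV. out_marg P V b) = 1" using assms by (simp add: stoch_def)
qed

lemma cond_entropy_decomp:
  assumes V: "stoch V" and P: "\<And>a. P a > 0"
  shows "cond_entropy P V = - (\<Sum>a\<in>UNIV. P a * ln (P a)) - (\<Sum>a\<in>UNIV. \<Sum>b\<in>UNIV. P a * V a b * ln (V a b))
           + (\<Sum>b\<in>UNIV. out_marg P V b * ln (out_marg P V b))"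
proof -
  have tm: "(if P a * V a b > 0 then P a * V a b * ln (P a * V a b / out_marg P V b) else 0)
     = P a * V a b * ln (P a) + P a * V a b * ln (V a b) - P a * V a b * ln (out_marg P V b)" for a b
  proof (cases "V a b > 0")
    case True
    have "P a * V a b \<le> out_marg P V b" unfolding out_marg_def
      using V P by (intro member_le_sum[of a UNIV "\<lambda>a. P a * V a b"]) (auto simp: stoch_def less_imp_le)
    hence q: "out_marg P V b > 0" using True P[of a] mult_pos_pos[of "P a" "V a b"] by linarith
    have eq: "ln (P a * V a b / out_marg P V b) = ln (P a) + ln (V a b) - ln (out_marg P V b)"
      using True P[of a] q by (simp add: ln_div ln_mult)
    have "(if P a * V a b > 0 then P a * V a b * ln (P a * V a b / out_marg P V b) else 0)
        = P a * V a b * ln (P a * V a b / out_marg P V b)" using True P[of a] by simp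
    also have "\<dots> = P a * V a b * (ln (P a) + ln (V a b) - ln (out_marg P V b))" by (simp only: eq)
    also have "\<dots> = P a * V a b * ln (P a) + P a * V a b * ln (V a b) - P a * V a b * ln (out_marg P V b)"
      by (simp add: algebra_simps)
    finally show ?thesis .
  next
    case False
    hence "V a b = 0" using V by (auto simp: stoch_def intro: antisym)
    thus ?thesis by simp
  qed
  have s1: "(\<Sum>a\<in>UNIV. \<Sum>b\<in>UNIV. P a * V a b * ln (P a)) = (\<Sum>a\<in>UNIV. P a * ln (P a))"
  proof (intro sum.cong refl)
    fix a
    have "(\<Sum>b\<in>UNIV. P a * V a b * ln (P a)) = P a * ln (P a) * (\<Sum>b\<in>UNIV. V a b)"
      by (simp add: sum_distrib_left algebra_simps)
    thus "(\<Sum>b\<in>UNIV. P a * V a b * ln (P a)) = P a * ln (P a)" using V by (simp add: stoch_def)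
  qed
  have s3: "(\<Sum>a\<in>UNIV. \<Sum>b\<in>UNIV. P a * V a b * ln (out_marg P V b)) = (\<Sum>b\<in>UNIV. out_marg P V b * ln (out_marg P V b))"
    by (subst sum.swap) (simp add: out_marg_def sum_distrib_right)
  have "cond_entropy P V = - (\<Sum>a\<in>UNIV. \<Sum>b\<in>UNIV. P a * V a b * ln (P a) + P a * V a b * ln (V a b) - P a * V a b * ln (out_marg P V b))"
    unfolding cond_entropy_def tm ..
  also have "\<dots> = - (\<Sum>a\<in>UNIV. \<Sum>b\<in>UNIV. P a * V a b * ln (P a)) - (\<Sum>a\<in>UNIV. \<Sum>b\<in>UNIV. P a * V a b * ln (V a b))
       + (\<Sum>a\<in>UNIV. \<Sum>b\<in>UNIV. P a * V a b * ln (out_marg P V b))"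
    by (simp add: sum.distrib sum_subtractf)
  finally show ?thesis unfolding s1 s3 .
qed

lemma entropy_pos_eq: "(\<And>a. P a > 0) \<Longrightarrow> entropy P = - (\<Sum>a\<in>UNIV. P a * ln (P a))"
  by (simp add: entropy_def)

lemma cond_entropy_bdd:
  fixes P :: "'x::finite \<Rightarrow> real" and V :: "'x \<Rightarrow> 'y::finite \<Rightarrow> real"
  assumes V: "stoch V" and P: "\<And>a. P a > 0" "(\<Sum>a\<in>UNIV. P a) = 1"
  shows "cond_entropy P V \<le> real (card (UNIV::'x::finite set) * card (UNIV::'y::finite set))"
proof -
  have t: "- (if P a * V a b > 0 then P a * V a b * ln (P a * V a b / out_marg P V b) else 0) \<le> 1"
    for a :: 'x and b :: 'y
  proof (cases "P a * V a b > 0")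
    case True
    have le: "P a * V a b \<le> out_marg P V b" unfolding out_marg_def
      using V P by (intro member_le_sum[of a UNIV "\<lambda>a. P a * V a b"]) (auto simp: stoch_def less_imp_le)
    hence q: "out_marg P V b > 0" using True by linarith
    have "- (P a * V a b * ln (P a * V a b / out_marg P V b)) = P a * V a b * ln (out_marg P V b / (P a * V a b))"
    proof -
      have ne1: "P a * V a b \<noteq> 0" using True by linarith
      have ne2: "out_marg P V b \<noteq> 0" using q by linarith
      show ?thesis by (simp add: ln_div ne1 ne2 algebra_simps)
    qed
    also have "\<dots> \<le> P a * V a b * (out_marg P V b / (P a * V a b) - 1)"
      using True q by (intro mult_left_mono ln_le_minus_one) auto
    also have "\<dots> = out_marg P V b - P a * V a b"
    proof -
      have ne: "P a * V a b \<noteq> 0" using True by linarith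
      show ?thesis using ne by (simp add: right_diff_distrib)
    qed
    also have "\<dots> \<le> 1"
    proof -
      have P0: "\<And>a. P a \<ge> 0" using P(1) less_imp_le by blast
      show ?thesis using out_marg_bounds(2)[OF V P0 P(2), where b=b] True by linarith
    qed
    finally show ?thesis using True by simp
  qed simp
  have "cond_entropy P V = (\<Sum>a\<in>UNIV. \<Sum>b\<in>UNIV. - (if P a * V a b > 0 then P a * V a b * ln (P a * V a b / out_marg P V b) else 0))"
    by (simp add: cond_entropy_def sum_negf)
  also have "\<dots> \<le> (\<Sum>a\<in>(UNIV::'x set). \<Sum>b\<in>(UNIV::'y set). 1)"
    by (intro sum_mono t)
  also have "\<dots> = real (card (UNIV::'x set) * card (UNIV::'y set))" by simp
  finally show ?thesis .
qed




lemma key_ineq: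
  fixes P :: "'x::finite \<Rightarrow> real" and V :: "'x \<Rightarrow> 'y::finite \<Rightarrow> real" and e :: "'y \<Rightarrow> real"
  assumes V: "stoch V" and P: "\<And>a. P a > 0" "(\<Sum>a\<in>UNIV. P a) = 1"
    and l: "0 < l" "l < 1" and tv: "tv_dist e (out_marg P V) < \<eta>"
  shows "entropy P + (\<Sum>b\<in>UNIV. e b * ln (out_marg P (smooth l V) b)) - ell l P V + \<eta>
     \<le> cond_entropy P V - ln (1 - l) + \<eta> + 2 * \<eta> * ln (real (card (UNIV::'y set)) / l)"
proof -
  define Q where "Q = real (card (UNIV::'y set))"
  define Lg where "Lg = ln (Q / l)"
  define q where "q = out_marg P V"
  define qt where "qt = out_marg P (smooth l V)"
  have P0: "\<And>a. P a \<ge> 0" using P(1) less_imp_le by blast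
  have Q1: "Q \<ge> 1" unfolding Q_def using card_gt_0_iff[of "UNIV::'y set"] by simp
  have Lg0: "Lg \<ge> 0" unfolding Lg_def using Q1 l by simp
  have qb: "0 \<le> q b" "q b \<le> 1" for b unfolding q_def using out_marg_bounds[OF V P0 P(2)] by auto
  have qsum: "(\<Sum>b\<in>UNIV. q b) = 1" unfolding q_def using out_marg_bounds[OF V P0 P(2)] by auto
  have qt_eq: "qt b = (1 - l) * q b + l / Q" for b
    unfolding qt_def q_def Q_def by (rule out_marg_smooth[OF P(2)])
  have lQ: "l / Q \<le> l" "l / Q > 0" using Q1 l by (auto simp: divide_le_eq)
  have qt_lo: "l / Q \<le> qt b" for b using qt_eq[of b] qb[of b] l by simp
  have qt_hi: "qt b \<le> 1" for b
  proof -
    have "(1 - l) * q b \<le> (1 - l) * 1" using qb[of b] l by (intro mult_left_mono) auto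
    thus ?thesis using qt_eq[of b] lQ by simp
  qed
  have qt_pos: "qt b > 0" for b using qt_lo[of b] lQ by linarith
  have qtsum: "(\<Sum>b\<in>UNIV. qt b) = 1" unfolding qt_def
  proof (rule out_marg_bounds(3)[OF _ P0 P(2)])
    show "stoch (smooth l V)" unfolding stoch_def
    proof (intro conjI allI)
      fix x y show "0 \<le> smooth l V x y" using smooth_bounds(3)[OF V l] less_imp_le by blast
    next
      fix x
      have "(\<Sum>y\<in>UNIV. smooth l V x y) = (1 - l) * (\<Sum>y\<in>UNIV. V x y) + Q * (l / Q)"
        unfolding smooth_def Q_def by (simp add: sum.distrib sum_distrib_left)
      thus "(\<Sum>y\<in>UNIV. smooth l V x y) = 1" using V Q1 by (simp add: stoch_def)
    qed
  qed
  have lnqt: "\<bar>ln (qt b)\<bar> \<le> Lg" for b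
  proof -
    have "ln (qt b) \<le> 0" using qt_hi[of b] qt_pos[of b] by simp
    moreover have "ln (l / Q) \<le> ln (qt b)" using qt_lo[of b] lQ by simp
    moreover have "ln (l / Q) = - Lg" unfolding Lg_def using l Q1 by (simp add: ln_div)
    ultimately show ?thesis by linarith
  qed
  have i: "(\<Sum>a\<in>UNIV. \<Sum>b\<in>UNIV. P a * V a b * (ln (V a b) + ln (1 - l))) \<le> ell l P V"
    unfolding ell_def
  proof (intro sum_mono)
    fix a b
    show "P a * V a b * (ln (V a b) + ln (1 - l)) \<le> P a * V a b * ln (smooth l V a b)"
    proof (cases "V a b > 0")
      case True
      have "(1 - l) * V a b \<le> smooth l V a b" unfolding smooth_def using lQ Q_def by simp
      moreover have "(1 - l) * V a b > 0" using True l by simp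
      ultimately have "ln ((1 - l) * V a b) \<le> ln (smooth l V a b)" by simp
      moreover have "ln ((1 - l) * V a b) = ln (V a b) + ln (1 - l)" using True l by (simp add: ln_mult)
      ultimately show ?thesis using P0[of a] True by (intro mult_left_mono) auto
    next
      case False
      hence "V a b = 0" using V by (auto simp: stoch_def intro: antisym)
      thus ?thesis by simp
    qed
  qed
  have i2: "(\<Sum>a\<in>UNIV. \<Sum>b\<in>UNIV. P a * V a b * (ln (V a b) + ln (1 - l)))
      = (\<Sum>a\<in>UNIV. \<Sum>b\<in>UNIV. P a * V a b * ln (V a b)) + ln (1 - l)"
  proof -
    have "(\<Sum>a\<in>UNIV. \<Sum>b\<in>UNIV. P a * V a b * (ln (V a b) + ln (1 - l)))
      = (\<Sum>a\<in>UNIV. \<Sum>b\<in>UNIV. P a * V a b * ln (V a b)) + (\<Sum>a\<in>UNIV. P a * (\<Sum>b\<in>UNIV. V a b) * ln (1 - l))"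
      by (simp add: distrib_left sum.distrib sum_distrib_left sum_distrib_right mult.assoc)
    also have "(\<Sum>a\<in>UNIV. P a * (\<Sum>b\<in>UNIV. V a b) * ln (1 - l)) = ln (1 - l)"
      using V P(2) by (simp add: stoch_def sum_distrib_right[symmetric])
    finally show ?thesis .
  qed
  have tm: "e b * ln (qt b) \<le> q b * ln (q b) + (qt b - q b) + \<bar>e b - q b\<bar> * Lg" for b
  proof -
    have 1: "(e b - q b) * ln (qt b) \<le> \<bar>e b - q b\<bar> * Lg"
    proof -
      have "(e b - q b) * ln (qt b) \<le> \<bar>(e b - q b) * ln (qt b)\<bar>" by simp
      also have "\<dots> = \<bar>e b - q b\<bar> * \<bar>ln (qt b)\<bar>" by (simp add: abs_mult)
      also have "\<dots> \<le> \<bar>e b - q b\<bar> * Lg" using lnqt[of b] by (intro mult_left_mono) auto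
      finally show ?thesis .
    qed
    have 2: "q b * ln (qt b) \<le> q b * ln (q b) + (qt b - q b)"
    proof (cases "q b > 0")
      case True
      have "ln (qt b / q b) \<le> qt b / q b - 1" using True qt_pos[of b] by (intro ln_le_minus_one) simp
      hence "ln (qt b) - ln (q b) \<le> qt b / q b - 1" using True qt_pos[of b] by (simp add: ln_div)
      hence "q b * (ln (qt b) - ln (q b)) \<le> q b * (qt b / q b - 1)" using True by (intro mult_left_mono) auto
      thus ?thesis using True by (simp add: algebra_simps)
    next
      case False
      hence "q b = 0" using qb[of b] by linarith
      thus ?thesis using qt_pos[of b] by simp
    qed
    have "e b * ln (qt b) = q b * ln (qt b) + (e b - q b) * ln (qt b)" by (simp add: algebra_simps)
    thus ?thesis using 1 2 by linarith
  qed
  have ii: "(\<Sum>b\<in>UNIV. e b * ln (qt b)) \<le> (\<Sum>b\<in>UNIV. q b * ln (q b)) + 2 * \<eta> * Lg"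
  proof -
    have "(\<Sum>b\<in>UNIV. e b * ln (qt b)) \<le> (\<Sum>b\<in>UNIV. q b * ln (q b) + (qt b - q b) + \<bar>e b - q b\<bar> * Lg)"
      by (intro sum_mono tm)
    also have "\<dots> = (\<Sum>b\<in>UNIV. q b * ln (q b)) + ((\<Sum>b\<in>UNIV. qt b) - (\<Sum>b\<in>UNIV. q b)) + (\<Sum>b\<in>UNIV. \<bar>e b - q b\<bar>) * Lg"
      by (simp add: sum.distrib sum_subtractf sum_distrib_right)
    also have "(\<Sum>b\<in>UNIV. \<bar>e b - q b\<bar>) = 2 * tv_dist e q" by (simp add: tv_dist_def)
    also have "2 * tv_dist e q * Lg \<le> 2 * \<eta> * Lg" using tv Lg0 unfolding q_def
      by (intro mult_right_mono) auto
    finally show ?thesis using qsum qtsum by simp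
  qed
  have dec: "cond_entropy P V = - (\<Sum>a\<in>UNIV. P a * ln (P a)) - (\<Sum>a\<in>UNIV. \<Sum>b\<in>UNIV. P a * V a b * ln (V a b))
           + (\<Sum>b\<in>UNIV. q b * ln (q b))" unfolding q_def by (rule cond_entropy_decomp[OF V P(1)])
  have ent: "entropy P = - (\<Sum>a\<in>UNIV. P a * ln (P a))" by (rule entropy_pos_eq[OF P(1)])
  show ?thesis using i i2 ii dec ent unfolding qt_def[symmetric] Lg_def[symmetric] Q_def[symmetric] by linarith
qed




lemma prod_exp_ln:
  fixes n :: nat
  assumes "\<And>t. t < n \<Longrightarrow> f t > (0::real)"
  shows "(\<Prod>t<n. f t) = exp (\<Sum>t<n. ln (f t))"
proof -
  have "exp (\<Sum>t<n. ln (f t)) = (\<Prod>t<n. exp (ln (f t)))" by (rule exp_sum[OF finite_lessThan])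
  also have "\<dots> = (\<Prod>t<n. f t)" by (intro prod.cong refl) (simp add: assms)
  finally show ?thesis by simp
qed

lemma count_emp: "real (count_list ys b) = real (length ys) * emp_dist ys b"
proof (cases "length ys = 0")
  case True thus ?thesis by simp
next
  case False thus ?thesis by (simp add: emp_dist_def)
qed

lemma SV_card:
  fixes P :: "'x::finite \<Rightarrow> real" and V :: "'x \<Rightarrow> 'y::finite \<Rightarrow> real" and ys :: "'y list"
  assumes V: "stoch V" and P: "\<And>a. P a > 0" "(\<Sum>a\<in>UNIV. P a) = 1" and l: "0 < l" "l < 1"
  shows "real (card {xs \<in> typ_class P (length ys). real (length ys) * (ell l P V - \<eta>) \<le> (\<Sum>t<length ys. ln (smooth l V (xs!t) (ys!t)))})
    \<le> exp (real (length ys) * (entropy P + (\<Sum>b\<in>UNIV. emp_dist ys b * ln (out_marg P (smooth l V) b)) - ell l P V + \<eta>))"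
proof -
  define c where "c = length ys"
  define S where "S = {xs \<in> typ_class P c. real c * (ell l P V - \<eta>) \<le> (\<Sum>t<c. ln (smooth l V (xs!t) (ys!t)))}"
  define F where "F xs = (\<Prod>t<c. P (xs!t) * smooth l V (xs!t) (ys!t))" for xs :: "'x list"
  define qt where "qt = out_marg P (smooth l V)"
  define B where "B = - real c * entropy P + real c * (ell l P V - \<eta>)"
  have sp: "smooth l V a b > 0" for a b using smooth_bounds(3)[OF V l] .
  have Sl: "S \<subseteq> {xs. length xs = c}" by (auto simp: S_def typ_class_def)
  have finS: "finite S" by (rule finite_subset[OF Sl finite_len])
  have lnP: "(\<Sum>t<c. ln (P (xs!t))) = - real c * entropy P" if "xs \<in> typ_class P c" for xs
  proof -
    have len: "length xs = c" and cnt: "\<And>a. real (count_list xs a) = real c * P a"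
      using that by (auto simp: typ_class_def)
    have "(\<Sum>t<c. ln (P (xs!t))) = (\<Sum>a\<in>UNIV. real (count_list xs a) * ln (P a))"
      using sum_count_list[of "\<lambda>a. ln (P a)" xs] len by simp
    also have "\<dots> = real c * (\<Sum>a\<in>UNIV. P a * ln (P a))" by (simp add: cnt sum_distrib_left mult.assoc)
    moreover have "entropy P = - (\<Sum>a\<in>UNIV. P a * ln (P a))" using entropy_pos_eq[of P] P(1) by blast
    ultimately show ?thesis by simp
  qed
  have Fexp: "F xs = exp ((\<Sum>t<c. ln (P (xs!t))) + (\<Sum>t<c. ln (smooth l V (xs!t) (ys!t))))" for xs
  proof -
    have "F xs = exp (\<Sum>t<c. ln (P (xs!t) * smooth l V (xs!t) (ys!t)))"
      unfolding F_def using P(1) sp by (intro prod_exp_ln) simp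
    also have "(\<Sum>t<c. ln (P (xs!t) * smooth l V (xs!t) (ys!t))) = (\<Sum>t<c. ln (P (xs!t))) + (\<Sum>t<c. ln (smooth l V (xs!t) (ys!t)))"
    proof -
      have lm: "\<And>x y::real. x > 0 \<Longrightarrow> y > 0 \<Longrightarrow> ln (x*y) = ln x + ln y" by (simp add: ln_mult)
      show ?thesis by (simp add: lm P(1) sp sum.distrib)
    qed
    finally show ?thesis .
  qed
  have Fpos: "F xs \<ge> 0" for xs unfolding Fexp by simp
  have "real (card S) * exp B = (\<Sum>xs\<in>S. exp B)" by simp
  also have "\<dots> \<le> (\<Sum>xs\<in>S. F xs)"
  proof (intro sum_mono)
    fix xs assume xs: "xs \<in> S"
    hence "B \<le> (\<Sum>t<c. ln (P (xs!t))) + (\<Sum>t<c. ln (smooth l V (xs!t) (ys!t)))"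
      unfolding B_def using lnP[of xs] by (auto simp: S_def)
    thus "exp B \<le> F xs" unfolding Fexp by simp
  qed
  also have "\<dots> \<le> (\<Sum>xs\<in>{xs. length xs = c}. F xs)"
    by (intro sum_mono2 finite_len Sl Fpos)
  also have "\<dots> = (\<Prod>t<c. \<Sum>a\<in>UNIV. P a * smooth l V a (ys!t))"
    unfolding F_def by (rule sum_lists_prod)
  also have "\<dots> = (\<Prod>t<c. qt (ys!t))" by (simp add: qt_def out_marg_def)
  also have "\<dots> = exp (\<Sum>t<c. ln (qt (ys!t)))"
  proof (rule prod_exp_ln)
    fix t
    have "qt (ys!t) \<ge> P undefined * smooth l V undefined (ys!t)" unfolding qt_def out_marg_def
      using P(1) sp by (intro member_le_sum) (auto intro: less_imp_le)
    moreover have "P undefined * smooth l V undefined (ys!t) > 0" using P(1) sp by simp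
    ultimately show "qt (ys!t) > 0" by linarith
  qed
  also have "(\<Sum>t<c. ln (qt (ys!t))) = real c * (\<Sum>b\<in>UNIV. emp_dist ys b * ln (qt b))"
    unfolding c_def using sum_count_list[of "\<lambda>b. ln (qt b)" ys]
    by (simp add: count_emp sum_distrib_left mult.assoc)
  finally have "real (card S) * exp B \<le> exp (real c * (\<Sum>b\<in>UNIV. emp_dist ys b * ln (qt b)))" .
  hence "real (card S) \<le> exp (real c * (\<Sum>b\<in>UNIV. emp_dist ys b * ln (qt b))) / exp B"
    by (simp add: le_divide_eq)
  also have "\<dots> = exp (real c * (entropy P + (\<Sum>b\<in>UNIV. emp_dist ys b * ln (qt b)) - ell l P V + \<eta>))"
    unfolding B_def by (simp add: exp_diff[symmetric] algebra_simps)
  finally show ?thesis unfolding S_def c_def qt_def .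
qed

lemma avg_identity:
  fixes xs :: "'x::finite list" and W :: "'x \<Rightarrow> 's \<Rightarrow> 'y::finite \<Rightarrow> real" and h :: "'x \<Rightarrow> 'y \<Rightarrow> real"
  assumes cnt: "\<And>a. real (count_list xs a) = real (length xs) * P a" and pos: "\<And>a. count_list xs a > 0"
  shows "(\<Sum>t<length xs. \<Sum>b\<in>UNIV. W (xs!t) (ss!t) b * h (xs!t) b)
     = real (length xs) * (\<Sum>a\<in>UNIV. \<Sum>b\<in>UNIV. P a * avg_channel W xs ss a b * h a b)"
proof -
  define c where "c = length xs"
  define S where "S a b = (\<Sum>t<c. if xs!t = a then W a (ss!t) b else 0)" for a b
  have "real c * (\<Sum>a\<in>UNIV. \<Sum>b\<in>UNIV. P a * avg_channel W xs ss a b * h a b)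
      = (\<Sum>a\<in>UNIV. \<Sum>b\<in>UNIV. S a b * h a b)"
    unfolding sum_distrib_left
  proof (intro sum.cong refl)
    fix a b
    have ne: "real (count_list xs a) \<noteq> 0" using pos[of a] by simp
    have "real c * (P a * avg_channel W xs ss a b * h a b) = real (count_list xs a) * avg_channel W xs ss a b * h a b"
      using cnt[of a] by (simp add: c_def)
    also have "\<dots> = S a b * h a b" using ne by (simp add: avg_channel_def S_def c_def)
    finally show "real c * (P a * avg_channel W xs ss a b * h a b) = S a b * h a b" .
  qed
  also have "\<dots> = (\<Sum>a\<in>UNIV. \<Sum>b\<in>UNIV. \<Sum>t<c. if xs!t = a then W a (ss!t) b * h a b else 0)"
    unfolding S_def sum_distrib_right by (intro sum.cong refl) simp
  also have "\<dots> = (\<Sum>t<c. \<Sum>b\<in>UNIV. \<Sum>a\<in>UNIV. if xs!t = a then W a (ss!t) b * h a b else 0)"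
  proof -
    have "(\<Sum>a\<in>UNIV. \<Sum>b\<in>UNIV. \<Sum>t<c. if xs!t = a then W a (ss!t) b * h a b else 0)
       = (\<Sum>a\<in>UNIV. \<Sum>t<c. \<Sum>b\<in>UNIV. if xs!t = a then W a (ss!t) b * h a b else 0)"
      by (intro sum.cong refl) (rule sum.swap)
    also have "\<dots> = (\<Sum>t<c. \<Sum>a\<in>UNIV. \<Sum>b\<in>UNIV. if xs!t = a then W a (ss!t) b * h a b else 0)"
      by (rule sum.swap)
    also have "\<dots> = (\<Sum>t<c. \<Sum>b\<in>UNIV. \<Sum>a\<in>UNIV. if xs!t = a then W a (ss!t) b * h a b else 0)"
      by (intro sum.cong refl) (rule sum.swap)
    finally show ?thesis .
  qed
  also have "\<dots> = (\<Sum>t<c. \<Sum>b\<in>UNIV. W (xs!t) (ss!t) b * h (xs!t) b)"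
    by (simp add: if_distrib eq_commute)
  finally show ?thesis unfolding c_def by simp
qed




definition Dec :: "real \<Rightarrow> real \<Rightarrow> ('x::finite \<Rightarrow> real) \<Rightarrow> 'y::finite list \<Rightarrow> ('x \<Rightarrow> 'y \<Rightarrow> real) set \<Rightarrow> 'x list set" where
  "Dec l \<eta> P ys \<V> = {xs \<in> typ_class P (length ys). \<exists>V\<in>\<V>. tv_dist (emp_dist ys) (out_marg P V) < \<eta> \<and>
      real (length ys) * (ell l P V - \<eta>) \<le> (\<Sum>t<length ys. ln (smooth l V (xs!t) (ys!t)))}"

lemma Dec_card:
  fixes P :: "'x::finite \<Rightarrow> real" and ys :: "'y::finite list" and \<V> :: "('x \<Rightarrow> 'y \<Rightarrow> real) set"
  assumes V: "\<And>V. V \<in> \<V> \<Longrightarrow> stoch V" and P: "\<And>a. P a > 0" "(\<Sum>a\<in>UNIV. P a) = 1"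
    and l: "0 < l" "l < 1" and \<eta>\<delta>: "\<eta> \<le> \<delta>"
    and slack: "- ln (1 - l) + \<eta> + 2 * \<eta> * ln (real (card (UNIV::'y set)) / l) \<le> \<xi>4"
  shows "real (card (Dec l \<eta> P ys \<V>)) \<le> (real (length ys) + 1) ^ (card (UNIV::'x set) * card (UNIV::'y set))
     * exp (real (length ys) * (Sup (cond_entropy P ` Vset \<V> P ys \<delta>) + \<xi>4))"
proof -
  define c where "c = length ys"
  define D where "D = Dec l \<eta> P ys \<V>"
  define jt where "jt xs = (\<lambda>ab. card {t. t < c \<and> (xs!t, ys!t) = ab})" for xs :: "'x list"
  define cnd where "cnd V J = (V \<in> \<V> \<and> tv_dist (emp_dist ys) (out_marg P V) < \<eta> \<and>
      real c * (ell l P V - \<eta>) \<le> (\<Sum>ab\<in>UNIV. real (J ab) * ln (smooth l V (fst ab) (snd ab))))" for V J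
  define G where "G J = (SOME V. cnd V J)" for J
  define S where "S V = {xs \<in> typ_class P c. real c * (ell l P V - \<eta>) \<le> (\<Sum>t<c. ln (smooth l V (xs!t) (ys!t)))}" for V
  define M where "M = Sup (cond_entropy P ` Vset \<V> P ys \<delta>)"
  have sumjt: "(\<Sum>t<c. g (xs!t) (ys!t)) = (\<Sum>ab\<in>UNIV. real (jt xs ab) * g (fst ab) (snd ab))" for xs and g :: "'x \<Rightarrow> 'y \<Rightarrow> real"
    unfolding jt_def using sum_fiber[of "\<lambda>ab. g (fst ab) (snd ab)" "\<lambda>t. (xs!t, ys!t)" c] by simp
  have Dl: "D \<subseteq> {xs. length xs = c}" by (auto simp: D_def Dec_def typ_class_def c_def)
  have finD: "finite D" by (rule finite_subset[OF Dl finite_len])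
  have cover: "D \<subseteq> (\<Union>J\<in>jt ` D. S (G J))"
  proof
    fix xs assume xs: "xs \<in> D"
    then obtain V where "V \<in> \<V>" "tv_dist (emp_dist ys) (out_marg P V) < \<eta>"
        "real c * (ell l P V - \<eta>) \<le> (\<Sum>t<c. ln (smooth l V (xs!t) (ys!t)))"
      by (auto simp: D_def Dec_def c_def)
    hence "cnd V (jt xs)" unfolding cnd_def using sumjt[of "\<lambda>a b. ln (smooth l V a b)" xs] by simp
    hence "cnd (G (jt xs)) (jt xs)" unfolding G_def using someI[of "\<lambda>V. cnd V (jt xs)" V] by blast
    hence "xs \<in> S (G (jt xs))" using xs unfolding cnd_def S_def
      using sumjt[of "\<lambda>a b. ln (smooth l (G (jt xs)) a b)" xs] by (auto simp: D_def Dec_def c_def)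
    thus "xs \<in> (\<Union>J\<in>jt ` D. S (G J))" using xs by blast
  qed
  have bdd: "bdd_above (cond_entropy P ` Vset \<V> P ys \<delta>)"
    by (rule bdd_aboveI[where M = "real (card (UNIV::'x set) * card (UNIV::'y set))"])
       (auto simp: Vset_def intro: cond_entropy_bdd[OF V P, simplified])
  have each: "real (card (S (G J))) \<le> exp (real c * (M + \<xi>4))" if J: "J \<in> jt ` D" for J
  proof -
    from J obtain xs where xs: "xs \<in> D" "J = jt xs" by blast
    then obtain V where "V \<in> \<V>" "tv_dist (emp_dist ys) (out_marg P V) < \<eta>"
        "real c * (ell l P V - \<eta>) \<le> (\<Sum>t<c. ln (smooth l V (xs!t) (ys!t)))"
      by (auto simp: D_def Dec_def c_def)
    hence "cnd V J" unfolding cnd_def using sumjt[of "\<lambda>a b. ln (smooth l V a b)" xs] xs by simp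
    hence cG: "cnd (G J) J" unfolding G_def using someI[of "\<lambda>V. cnd V J" V] by blast
    hence GV: "G J \<in> \<V>" and tvG: "tv_dist (emp_dist ys) (out_marg P (G J)) < \<eta>" by (auto simp: cnd_def)
    have sG: "stoch (G J)" using V GV .
    have "real (card (S (G J))) \<le> exp (real c * (entropy P + (\<Sum>b\<in>UNIV. emp_dist ys b * ln (out_marg P (smooth l (G J)) b)) - ell l P (G J) + \<eta>))"
      unfolding S_def c_def by (rule SV_card[OF sG P l])
    also have "\<dots> \<le> exp (real c * (cond_entropy P (G J) + \<xi>4))"
      using key_ineq[OF sG P l tvG] slack by (intro exp_mono mult_left_mono) auto
    also have "cond_entropy P (G J) \<le> M"
    proof -
      have "G J \<in> Vset \<V> P ys \<delta>" using GV tvG \<eta>\<delta> by (auto simp: Vset_def)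
      thus ?thesis unfolding M_def using bdd by (intro cSup_upper) auto
    qed
    hence "exp (real c * (cond_entropy P (G J) + \<xi>4)) \<le> exp (real c * (M + \<xi>4))"
      by (intro exp_mono mult_left_mono) auto
    finally show ?thesis .
  qed
  have "card D \<le> card (\<Union>J\<in>jt ` D. S (G J))"
  proof (rule card_mono[OF _ cover])
    have "S V \<subseteq> {xs. length xs = c}" for V by (auto simp: S_def typ_class_def)
    hence fS: "finite (S V)" for V using finite_len finite_subset by blast
    thus "finite (\<Union>J\<in>jt ` D. S (G J))" using finD by (intro finite_UN_I finite_imageI) auto
  qed
  also have "\<dots> \<le> (\<Sum>J\<in>jt ` D. card (S (G J)))" by (rule card_UN_le) (use finD in simp)
  finally have "real (card D) \<le> (\<Sum>J\<in>jt ` D. real (card (S (G J))))" by (simp flip: of_nat_sum)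
  also have "\<dots> \<le> (\<Sum>J\<in>jt ` D. exp (real c * (M + \<xi>4)))" by (intro sum_mono each)
  also have "\<dots> = real (card (jt ` D)) * exp (real c * (M + \<xi>4))" by simp
  also have "real (card (jt ` D)) \<le> (real c + 1) ^ (card (UNIV::'x set) * card (UNIV::'y set))"
  proof -
    have sub: "jt ` D \<subseteq> Pi\<^sub>E UNIV (\<lambda>_. {..c})"
    proof
      fix J assume "J \<in> jt ` D"
      then obtain xs where J: "J = jt xs" by blast
      have "jt xs ab \<le> c" for ab
      proof -
        have "jt xs ab \<le> card {..<c}" unfolding jt_def by (intro card_mono) auto
        thus ?thesis by simp
      qed
      thus "J \<in> Pi\<^sub>E UNIV (\<lambda>_. {..c})" unfolding J by (simp add: PiE_UNIV_domain)
    qed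
    have "card (jt ` D) \<le> card (Pi\<^sub>E (UNIV::('x\<times>'y) set) (\<lambda>_. {..c}))"
      by (intro card_mono sub finite_PiE) auto
    also have "\<dots> = (c + 1) ^ (card (UNIV::('x\<times>'y) set))" by (simp add: card_PiE)
    also have "card (UNIV::('x\<times>'y) set) = card (UNIV::'x set) * card (UNIV::'y set)"
      by (simp flip: UNIV_Times_UNIV add: card_cartesian_product)
    finally have "card (jt ` D) \<le> (c + 1) ^ (card (UNIV::'x set) * card (UNIV::'y set))" .
    hence "real (card (jt ` D)) \<le> real ((c + 1) ^ (card (UNIV::'x set) * card (UNIV::'y set)))" by (simp only: of_nat_le_iff)
    thus ?thesis by (simp add: add.commute)
  qed
  hence "real (card (jt ` D)) * exp (real c * (M + \<xi>4)) \<le> (real c + 1) ^ (card (UNIV::'x set) * card (UNIV::'y set)) * exp (real c * (M + \<xi>4))"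
    by (intro mult_right_mono) auto
  finally show ?thesis unfolding D_def c_def M_def .
qed




lemma sum_Un_le_nonneg:
  fixes f :: "'a \<Rightarrow> real"
  assumes "finite A" "finite B" "\<And>x. f x \<ge> 0"
  shows "sum f (A \<union> B) \<le> sum f A + sum f B"
proof -
  have "sum f (A \<inter> B) \<ge> 0" using assms by (intro sum_nonneg) auto
  thus ?thesis using sum_Un[OF assms(1,2), of f] by simp
qed

lemma sum_UN_le_nonneg:
  fixes f :: "'a \<Rightarrow> real"
  assumes "finite I" "\<And>i. finite (S i)" "\<And>x. f x \<ge> 0"
  shows "sum f (\<Union>i\<in>I. S i) \<le> (\<Sum>i\<in>I. sum f (S i))"
  using assms(1)
proof (induction I rule: finite_induct)
  case empty thus ?case by simp
next
  case (insert i I)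
  have "sum f (\<Union>j\<in>insert i I. S j) = sum f (S i \<union> (\<Union>j\<in>I. S j))" by simp
  also have "\<dots> \<le> sum f (S i) + sum f (\<Union>j\<in>I. S j)"
    using assms insert by (intro sum_Un_le_nonneg) auto
  also have "\<dots> \<le> sum f (S i) + (\<Sum>j\<in>I. sum f (S j))" using insert by simp
  finally show ?case using insert by simp
qed

lemma sum_ind:
  fixes b :: "'y::finite"
  shows "(\<Sum>b'\<in>UNIV. f b' * (if b' = b then 1 else 0)) = (f b :: real)"
proof -
  have "(\<Sum>b'\<in>UNIV. f b' * (if b' = b then 1 else 0)) = (\<Sum>b'\<in>UNIV. if b' = b then f b' else 0)"
    by (intro sum.cong) auto
  also have "\<dots> = f b" by (simp add: sum.delta')
  finally show ?thesis .
qed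

lemma err_bound:
  fixes W :: "'x::finite \<Rightarrow> 's::finite \<Rightarrow> 'y::finite \<Rightarrow> real" and P :: "'x \<Rightarrow> real"
    and xs :: "'x list" and ss :: "'s list" and \<V> :: "('x \<Rightarrow> 'y \<Rightarrow> real) set"
  assumes W: "avc W" and P: "\<And>a. P a > 0" "(\<Sum>a\<in>UNIV. P a) = 1"
    and l: "0 < l" "l < 1" and eta: "0 < \<eta>" "\<eta> \<le> 1"
    and xs: "xs \<in> typ_class P c" and c: "c \<ge> 1"
    and V0in: "avg_channel W xs ss \<in> \<V>" and sV0: "stoch (avg_channel W xs ss)"
  shows "list_err W (\<lambda>ys. Dec l \<eta> P ys \<V>) xs ss
     \<le> 2 * real (card (UNIV::'y set)) * exp (- (real c * (\<eta> / real (card (UNIV::'y set)))^2 / (4 * 1^2)))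
       + exp (- (real c * \<eta>^2 / (4 * (ln (real (card (UNIV::'y set)) / l) + 1)^2)))"
proof -
  define V0 where "V0 = avg_channel W xs ss"
  define Q where "Q = real (card (UNIV::'y set))"
  define Lg where "Lg = ln (Q / l)"
  define R where "R = Lg + 1"
  define \<eta>1 where "\<eta>1 = \<eta> / Q"
  define p where "p t = W (xs!t) (ss!t)" for t
  define f where "f ys = (\<Prod>t<c. p t (ys!t))" for ys :: "'y list"
  define Ev where "Ev g d = {ys. length ys = c \<and> (\<Sum>t<c. \<Sum>b'\<in>UNIV. p t b' * g t b') + real c * d \<le> (\<Sum>t<c. g t (ys!t))}"
    for g :: "nat \<Rightarrow> 'y \<Rightarrow> real" and d
  define gI where "gI b t y = (if y = b then 1 else (0::real))" for b :: 'y and t :: nat and y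
  define gN where "gN b t y = - gI b t y" for b :: 'y and t :: nat and y
  define gL where "gL t y = - ln (smooth l V0 (xs!t) y)" for t y
  have len: "length xs = c" and cnt: "\<And>a. real (count_list xs a) = real c * P a"
    using xs by (auto simp: typ_class_def)
  have cpos: "\<And>a. count_list xs a > 0"
  proof -
    fix a have "real c * P a > 0" using c P(1)[of a] by simp
    thus "count_list xs a > 0" using cnt[of a] by simp
  qed
  have cnt': "\<And>a. real (count_list xs a) = real (length xs) * P a" using cnt len by simp
  have Q1: "Q \<ge> 1" unfolding Q_def using card_gt_0_iff[of "UNIV::'y set"] by simp
  have Lg0: "Lg \<ge> 0" unfolding Lg_def using Q1 l by simp
  have R0: "R > 0" unfolding R_def using Lg0 by simp
  have \<eta>1: "\<eta>1 > 0" "\<eta>1 \<le> 2" unfolding \<eta>1_def using eta Q1 by (auto simp: divide_le_eq)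
  have p0: "\<And>t b. p t b \<ge> 0" and p1: "\<And>t. (\<Sum>b\<in>UNIV. p t b) = 1"
    using W by (auto simp: avc_def p_def)
  have ple1: "p t b \<le> 1" for t b
  proof -
    have "p t b \<le> (\<Sum>b\<in>UNIV. p t b)" using p0 by (intro member_le_sum) auto
    thus ?thesis using p1 by simp
  qed
  have f0: "f ys \<ge> 0" for ys unfolding f_def using p0 by (intro prod_nonneg) auto
  have finEv: "finite (Ev g d)" for g d
    by (rule finite_subset[OF _ finite_len[of c]]) (auto simp: Ev_def)
  have mI: "(\<Sum>t<c. \<Sum>b'\<in>UNIV. p t b' * gI b t b') = real c * out_marg P V0 b" for b
  proof -
    have "(\<Sum>t<c. \<Sum>b'\<in>UNIV. p t b' * gI b t b') = (\<Sum>t<length xs. \<Sum>b'\<in>UNIV. W (xs!t) (ss!t) b' * (\<lambda>a b'. if b' = b then 1 else 0) (xs!t) b')"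
      by (simp add: len p_def gI_def)
    also have "\<dots> = real (length xs) * (\<Sum>a\<in>UNIV. \<Sum>b'\<in>UNIV. P a * avg_channel W xs ss a b' * (\<lambda>a b'. if b' = b then 1 else 0) a b')"
      by (rule avg_identity[OF cnt' cpos])
    also have "\<dots> = real c * out_marg P V0 b"
      by (simp add: len out_marg_def V0_def sum_ind[of "\<lambda>b'. P _ * avg_channel W xs ss _ b'" b])
    finally show ?thesis .
  qed
  have mL: "(\<Sum>t<c. \<Sum>b'\<in>UNIV. p t b' * gL t b') = - (real c * ell l P V0)"
  proof -
    have "(\<Sum>t<c. \<Sum>b'\<in>UNIV. p t b' * gL t b') = (\<Sum>t<length xs. \<Sum>b'\<in>UNIV. W (xs!t) (ss!t) b' * (\<lambda>a b'. - ln (smooth l V0 a b')) (xs!t) b')"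
      by (simp add: len p_def gL_def)
    also have "\<dots> = real (length xs) * (\<Sum>a\<in>UNIV. \<Sum>b'\<in>UNIV. P a * avg_channel W xs ss a b' * (\<lambda>a b'. - ln (smooth l V0 a b')) a b')"
      by (rule avg_identity[OF cnt' cpos])
    also have "\<dots> = - (real c * ell l P V0)"
      by (simp add: len ell_def V0_def sum_negf)
    finally show ?thesis .
  qed
  have cntys: "(\<Sum>t<c. gI b t (ys!t)) = real (count_list ys b)" if "length ys = c" for ys b
  proof -
    have "(\<Sum>t<length ys. (\<lambda>z. if z = b then 1 else 0) (ys!t)) = (\<Sum>z\<in>UNIV. real (count_list ys z) * (if z = b then 1 else 0))"
      by (rule sum_count_list)
    also have "\<dots> = real (count_list ys b)" by (rule sum_ind)
    finally show ?thesis using that by (simp add: gI_def)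
  qed
  define Bad where "Bad = {ys. length ys = c \<and> xs \<notin> Dec l \<eta> P ys \<V>}"
  have cover: "Bad \<subseteq> (\<Union>b\<in>UNIV. Ev (gI b) \<eta>1) \<union> (\<Union>b\<in>UNIV. Ev (gN b) \<eta>1) \<union> Ev gL \<eta>"
  proof
    fix ys assume ys: "ys \<in> Bad"
    hence lys: "length ys = c" by (simp add: Bad_def)
    show "ys \<in> (\<Union>b\<in>UNIV. Ev (gI b) \<eta>1) \<union> (\<Union>b\<in>UNIV. Ev (gN b) \<eta>1) \<union> Ev gL \<eta>"
    proof (rule ccontr)
      assume "\<not> ?thesis"
      hence nI: "\<And>b. ys \<notin> Ev (gI b) \<eta>1" and nN: "\<And>b. ys \<notin> Ev (gN b) \<eta>1" and nL: "ys \<notin> Ev gL \<eta>" by auto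
      have close: "\<bar>emp_dist ys b - out_marg P V0 b\<bar> < \<eta>1" for b
      proof -
        have a1: "real (count_list ys b) < real c * out_marg P V0 b + real c * \<eta>1"
          using nI[of b] lys by (simp add: Ev_def mI cntys)
        have sN: "(\<Sum>t<c. \<Sum>b'\<in>UNIV. p t b' * gN b t b') = - (real c * out_marg P V0 b)"
          using mI[of b] by (simp add: gN_def sum_negf)
        have sN2: "(\<Sum>t<c. gN b t (ys!t)) = - real (count_list ys b)"
          using cntys[OF lys, of b] by (simp add: gN_def sum_negf)
        have a2: "- real (count_list ys b) < - (real c * out_marg P V0 b) + real c * \<eta>1"
          using nN[of b] lys by (simp add: Ev_def sN sN2)
        have e: "emp_dist ys b = real (count_list ys b) / real c" using lys by (simp add: emp_dist_def)
        have "\<bar>real (count_list ys b) - real c * out_marg P V0 b\<bar> < real c * \<eta>1" using a1 a2 by linarith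
        hence "\<bar>real (count_list ys b) / real c - out_marg P V0 b\<bar> < \<eta>1" using c
          by (simp add: abs_less_iff field_simps)
        thus ?thesis using e by simp
      qed
      have tv: "tv_dist (emp_dist ys) (out_marg P V0) < \<eta>"
      proof -
        have "(\<Sum>b\<in>UNIV. \<bar>emp_dist ys b - out_marg P V0 b\<bar>) < (\<Sum>b\<in>(UNIV::'y set). \<eta>1)"
          by (rule sum_strict_mono) (auto intro: close)
        also have "\<dots> = \<eta>" unfolding \<eta>1_def Q_def using Q1 Q_def by simp
        finally show ?thesis unfolding tv_dist_def using eta by simp
      qed
      have lnL: "real c * (ell l P V0 - \<eta>) \<le> (\<Sum>t<c. ln (smooth l V0 (xs!t) (ys!t)))"
      proof -
        have "\<not> (- (real c * ell l P V0) + real c * \<eta> \<le> (\<Sum>t<c. gL t (ys!t)))"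
          using nL lys by (simp add: Ev_def mL)
        hence "(\<Sum>t<c. gL t (ys!t)) < - (real c * ell l P V0) + real c * \<eta>" by simp
        moreover have "(\<Sum>t<c. gL t (ys!t)) = - (\<Sum>t<c. ln (smooth l V0 (xs!t) (ys!t)))"
          by (simp add: gL_def sum_negf)
        ultimately show ?thesis by (simp add: algebra_simps)
      qed
      have "xs \<in> Dec l \<eta> P ys \<V>"
        unfolding Dec_def using xs lys tv lnL V0in unfolding V0_def by auto
      thus False using ys by (simp add: Bad_def)
    qed
  qed
  have chI: "sum f (Ev (gI b) \<eta>1) \<le> exp (- (real c * \<eta>1^2 / (4 * 1^2)))" for b
    unfolding f_def Ev_def
  proof (rule chernoff)
    show "\<And>t b'. t < c \<Longrightarrow> 0 \<le> p t b'" using p0 by auto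
    show "\<And>t. t < c \<Longrightarrow> (\<Sum>b'\<in>UNIV. p t b') = 1" using p1 by auto
    show "\<And>t b'. t < c \<Longrightarrow> \<bar>gI b t b' - (\<Sum>b''\<in>UNIV. p t b'' * gI b t b'')\<bar> \<le> 1"
    proof -
      fix t b'
      have "(\<Sum>b''\<in>UNIV. p t b'' * gI b t b'') = p t b" unfolding gI_def by (rule sum_ind)
      thus "\<bar>gI b t b' - (\<Sum>b''\<in>UNIV. p t b'' * gI b t b'')\<bar> \<le> 1"
        using p0[of t b] ple1[of t b] by (simp add: gI_def)
    qed
  qed (use \<eta>1 in auto)
  have chN: "sum f (Ev (gN b) \<eta>1) \<le> exp (- (real c * \<eta>1^2 / (4 * 1^2)))" for b
    unfolding f_def Ev_def
  proof (rule chernoff)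
    show "\<And>t b'. t < c \<Longrightarrow> 0 \<le> p t b'" using p0 by auto
    show "\<And>t. t < c \<Longrightarrow> (\<Sum>b'\<in>UNIV. p t b') = 1" using p1 by auto
    show "\<And>t b'. t < c \<Longrightarrow> \<bar>gN b t b' - (\<Sum>b''\<in>UNIV. p t b'' * gN b t b'')\<bar> \<le> 1"
    proof -
      fix t b'
      have "(\<Sum>b''\<in>UNIV. p t b'' * gI b t b'') = p t b" unfolding gI_def by (rule sum_ind)
      hence "(\<Sum>b''\<in>UNIV. p t b'' * gN b t b'') = - p t b" by (simp add: gN_def sum_negf)
      thus "\<bar>gN b t b' - (\<Sum>b''\<in>UNIV. p t b'' * gN b t b'')\<bar> \<le> 1"
        using p0[of t b] ple1[of t b] by (simp add: gN_def gI_def)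
    qed
  qed (use \<eta>1 in auto)
  have gLb: "0 \<le> gL t y" "gL t y \<le> Lg" for t y
  proof -
    have s1: "l / Q \<le> smooth l V0 (xs!t) y" "smooth l V0 (xs!t) y \<le> 1" "smooth l V0 (xs!t) y > 0"
      using smooth_bounds[OF sV0[folded V0_def] l] unfolding Q_def by auto
    have "ln (l / Q) \<le> ln (smooth l V0 (xs!t) y)" using s1 l Q1 by simp
    moreover have "ln (l / Q) = - Lg" unfolding Lg_def using l Q1 by (simp add: ln_div)
    moreover have "ln (smooth l V0 (xs!t) y) \<le> 0" using s1 by simp
    ultimately show "0 \<le> gL t y" "gL t y \<le> Lg" unfolding gL_def by linarith+
  qed
  have chL: "sum f (Ev gL \<eta>) \<le> exp (- (real c * \<eta>^2 / (4 * R^2)))"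
    unfolding f_def Ev_def
  proof (rule chernoff)
    show "\<And>t b'. t < c \<Longrightarrow> 0 \<le> p t b'" using p0 by auto
    show "\<And>t. t < c \<Longrightarrow> (\<Sum>b'\<in>UNIV. p t b') = 1" using p1 by auto
    show "\<And>t b'. t < c \<Longrightarrow> \<bar>gL t b' - (\<Sum>b''\<in>UNIV. p t b'' * gL t b'')\<bar> \<le> R"
    proof -
      fix t b'
      have m0: "0 \<le> (\<Sum>b''\<in>UNIV. p t b'' * gL t b'')" using p0 gLb by (intro sum_nonneg) auto
      have "(\<Sum>b''\<in>UNIV. p t b'' * gL t b'') \<le> (\<Sum>b''\<in>UNIV. p t b'' * Lg)"
        using p0 gLb by (intro sum_mono mult_left_mono) auto
      also have "\<dots> = Lg" using p1 by (simp add: sum_distrib_right[symmetric])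
      finally show "\<bar>gL t b' - (\<Sum>b''\<in>UNIV. p t b'' * gL t b'')\<bar> \<le> R"
        using m0 gLb[of t b'] unfolding R_def by linarith
    qed
  qed (use R0 eta Lg0 in \<open>auto simp: R_def\<close>)
  have "list_err W (\<lambda>ys. Dec l \<eta> P ys \<V>) xs ss = sum f Bad"
    by (simp add: list_err_def chan_prob_def Bad_def f_def p_def len)
  also have "\<dots> \<le> sum f ((\<Union>b\<in>UNIV. Ev (gI b) \<eta>1) \<union> (\<Union>b\<in>UNIV. Ev (gN b) \<eta>1) \<union> Ev gL \<eta>)"
    by (intro sum_mono2 cover f0) (auto intro: finEv)
  also have "\<dots> \<le> sum f ((\<Union>b\<in>UNIV. Ev (gI b) \<eta>1) \<union> (\<Union>b\<in>UNIV. Ev (gN b) \<eta>1)) + sum f (Ev gL \<eta>)"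
    by (intro sum_Un_le_nonneg f0 finEv) (auto intro: finEv)
  also have "sum f ((\<Union>b\<in>UNIV. Ev (gI b) \<eta>1) \<union> (\<Union>b\<in>UNIV. Ev (gN b) \<eta>1))
      \<le> sum f (\<Union>b\<in>UNIV. Ev (gI b) \<eta>1) + sum f (\<Union>b\<in>UNIV. Ev (gN b) \<eta>1)"
    by (intro sum_Un_le_nonneg f0) (auto intro: finEv)
  also have "sum f (\<Union>b\<in>UNIV. Ev (gI b) \<eta>1) \<le> (\<Sum>b\<in>UNIV. sum f (Ev (gI b) \<eta>1))"
    by (intro sum_UN_le_nonneg f0 finEv) auto
  also have "\<dots> \<le> (\<Sum>b\<in>(UNIV::'y set). exp (- (real c * \<eta>1^2 / (4 * 1^2))))"
    by (intro sum_mono chI)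
  also have "sum f (\<Union>b\<in>UNIV. Ev (gN b) \<eta>1) \<le> (\<Sum>b\<in>UNIV. sum f (Ev (gN b) \<eta>1))"
    by (intro sum_UN_le_nonneg f0 finEv) auto
  also have "\<dots> \<le> (\<Sum>b\<in>(UNIV::'y set). exp (- (real c * \<eta>1^2 / (4 * 1^2))))"
    by (intro sum_mono chN)
  also note chL
  finally show ?thesis unfolding \<eta>1_def Q_def R_def Lg_def by simp
qed




lemma ln_le_2sqrt:
  assumes "(x::real) \<ge> 0" shows "ln (1 + x) \<le> 2 * sqrt x"
proof -
  define s where "s = sqrt (1 + x)"
  have s0: "s > 0" using assms by (simp add: s_def)
  have ss: "s^2 = 1 + x" using assms by (simp add: s_def)
  have "ln (1 + x) = ln (s^2)" using ss by simp
  also have "\<dots> = 2 * ln s" using s0 by (simp add: ln_realpow)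
  also have "\<dots> \<le> 2 * (s - 1)" using ln_le_minus_one[OF s0] by simp
  also have "s \<le> 1 + sqrt x"
  proof -
    have "(1 + sqrt x)^2 = 1 + 2 * sqrt x + x" using assms by (simp add: power2_eq_square algebra_simps)
    moreover have "sqrt x \<ge> 0" using assms by simp
    ultimately have "s^2 \<le> (1 + sqrt x)^2" using ss by linarith
    thus ?thesis by (rule power2_le_imp_le) (simp add: assms)
  qed
  hence "2 * (s - 1) \<le> 2 * sqrt x" by simp
  finally show ?thesis .
qed

lemma lin_beats_log:
  assumes a: "a > 0" and B: "B \<ge> 0" and c: "real c \<ge> (2 * B / a)^2"
  shows "B * ln (real c + 1) \<le> a * real c"
proof -
  have "B * ln (real c + 1) \<le> B * (2 * sqrt (real c))"
    using ln_le_2sqrt[of "real c"] B by (intro mult_left_mono) (auto simp: add.commute)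
  also have "2 * B / a \<le> sqrt (real c)"
  proof -
    have "sqrt ((2 * B / a)^2) \<le> sqrt (real c)" using c by (simp only: real_sqrt_le_iff)
    thus ?thesis using a B by simp
  qed
  hence "2 * B \<le> a * sqrt (real c)" using a by (simp add: divide_le_eq mult.commute)
  hence "2 * B * sqrt (real c) \<le> a * sqrt (real c) * sqrt (real c)"
    by (rule mult_right_mono) simp
  hence "B * (2 * sqrt (real c)) \<le> a * sqrt (real c) * sqrt (real c)" by (simp add: mult.assoc mult.left_commute)
  also have "\<dots> = a * real c" by (simp add: mult.assoc)
  finally show ?thesis .
qed

lemma choice_helper:
  assumes "\<And>\<xi>. \<xi> > 0 \<Longrightarrow> \<exists>e>0. F \<xi> e"
  shows "\<exists>E. (\<forall>\<xi>>0. E \<xi> > (0::real)) \<and> (\<forall>\<xi>>0. F \<xi> (E \<xi>))"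
proof -
  have "\<forall>\<xi>. \<exists>e. \<xi> > 0 \<longrightarrow> e > 0 \<and> F \<xi> e" using assms by blast
  hence "\<exists>E. \<forall>\<xi>. \<xi> > 0 \<longrightarrow> E \<xi> > 0 \<and> F \<xi> (E \<xi>)" by (rule choice)
  then obtain E where "\<forall>\<xi>. \<xi> > 0 \<longrightarrow> E \<xi> > 0 \<and> F \<xi> (E \<xi>)" by blast
  thus ?thesis by blast
qed

lemma main_xi:
  fixes W :: "'x::finite \<Rightarrow> 's::finite \<Rightarrow> 'y::finite \<Rightarrow> real"
    and P :: "'x \<Rightarrow> real" and \<delta> :: real
    and Vfam :: "nat \<Rightarrow> ('x \<Rightarrow> 'y \<Rightarrow> real) set set"
  assumes W: "avc W"
    and Ppos: "\<forall>a. P a > 0" and Psum: "(\<Sum>a\<in>UNIV. P a) = 1"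
    and \<delta>: "\<delta> > 0"
    and Vst: "\<forall>c. \<forall>\<V>\<in>Vfam c. \<forall>V\<in>\<V>. stoch V"
    and \<xi>: "\<xi> > 0"
  shows "\<exists>e>0. \<exists>c0::nat. \<forall>c\<ge>c0. (\<forall>a. real c * P a \<in> \<nat>) \<longrightarrow>
       real (card (typ_class P c)) \<ge> exp (real c * (entropy P - \<xi>)) \<and>
       (\<exists>Dec :: 'y list \<Rightarrow> ('x \<Rightarrow> 'y \<Rightarrow> real) set \<Rightarrow> 'x list set.
          \<forall>\<V>\<in>Vfam c.
            (\<forall>ys. length ys = c \<longrightarrow>
               Dec ys \<V> \<subseteq> typ_class P c \<and>
               (if Vset \<V> P ys \<delta> = {} then Dec ys \<V> = {}
                else real (card (Dec ys \<V>)) \<le>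
                  exp (real c * (Sup (cond_entropy P ` Vset \<V> P ys \<delta>) + \<xi>)))) \<and>
            (\<forall>xs\<in>typ_class P c. \<forall>ss::'s list. length ss = c \<longrightarrow>
               avg_channel W xs ss \<in> \<V> \<longrightarrow>
               list_err W (\<lambda>ys. Dec ys \<V>) xs ss \<le> exp (- real c * e)))"
proof -
  have P: "\<And>a. P a > 0" using Ppos by blast
  define l where "l = 1 - exp (- \<xi> / 8)"
  define Q where "Q = real (card (UNIV::'y set))"
  define Lg where "Lg = ln (Q / l)"
  define \<eta> where "\<eta> = min (min \<delta> 1) (\<xi> / (8 * (1 + 2 * Lg)))"
  define \<eta>1 where "\<eta>1 = \<eta> / Q"
  define R where "R = Lg + 1"
  define e where "e = min (\<eta>1^2 / 4) (\<eta>^2 / (4 * R^2)) / 2"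
  define K where "K = card (UNIV::'x set)"
  define KQ where "KQ = card (UNIV::'x set) * card (UNIV::'y set)"
  have ex: "exp (- \<xi> / 8) < 1" "exp (- \<xi> / 8) > 0" using \<xi> by auto
  have l: "0 < l" "l < 1" using ex by (auto simp: l_def)
  have ln1l: "ln (1 - l) = - \<xi> / 8" by (simp add: l_def)
  have Q1: "Q \<ge> 1" unfolding Q_def using card_gt_0_iff[of "UNIV::'y set"] by simp
  have Lg0: "Lg \<ge> 0" unfolding Lg_def using Q1 l by simp
  have d0: "\<xi> / (8 * (1 + 2 * Lg)) > 0" using \<xi> Lg0 by simp
  have \<eta>0: "\<eta> > 0" using \<delta> d0 by (simp add: \<eta>_def)
  have \<eta>\<delta>: "\<eta> \<le> \<delta>" and \<eta>1': "\<eta> \<le> 1" by (auto simp: \<eta>_def)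
  have \<eta>x: "\<eta> * (1 + 2 * Lg) \<le> \<xi> / 8"
  proof -
    have dpos: "8 * (1 + 2 * Lg) > 0" using Lg0 by simp
    have "\<eta> \<le> \<xi> / (8 * (1 + 2 * Lg))" by (simp add: \<eta>_def)
    hence "\<eta> * (8 * (1 + 2 * Lg)) \<le> \<xi>" using pos_le_divide_eq[OF dpos] by blast
    thus ?thesis by (simp add: algebra_simps)
  qed
  have lnQ: "ln (real (card (UNIV::'y set)) / l) = Lg" by (simp add: Lg_def Q_def)
  have slack: "- ln (1 - l) + \<eta> + 2 * \<eta> * ln (real (card (UNIV::'y set)) / l) \<le> \<xi> / 4"
  proof -
    have "\<eta> + 2 * \<eta> * Lg = \<eta> * (1 + 2 * Lg)" by (simp add: algebra_simps)
    thus ?thesis unfolding lnQ ln1l using \<eta>x by linarith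
  qed
  have \<eta>10: "\<eta>1 > 0" unfolding \<eta>1_def using \<eta>0 Q1 by simp
  have R0: "R > 0" unfolding R_def using Lg0 by simp
  have e0: "e > 0" unfolding e_def using \<eta>10 \<eta>0 R0 by simp
  have e1: "2 * e \<le> \<eta>1^2 / 4" and e2: "2 * e \<le> \<eta>^2 / (4 * R^2)" by (auto simp: e_def)
  define N1 where "N1 = nat \<lceil>(2 * real K / (\<xi>/2))^2\<rceil>"
  define N1' where "N1' = nat \<lceil>2 * real K / \<xi>\<rceil>"
  define N2 where "N2 = nat \<lceil>(2 * real KQ / (3*\<xi>/4))^2\<rceil>"
  define N3 where "N3 = nat \<lceil>ln (2 * Q + 1) / e\<rceil>"
  define c0 where "c0 = max 1 (max N1 (max N1' (max N2 N3)))"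
  show ?thesis
  proof (intro exI[of _ e] conjI e0 exI[of _ c0] allI impI)
    fix c :: nat assume cc0: "c \<ge> c0" and N: "\<forall>a. real c * P a \<in> \<nat>"
    have c1: "c \<ge> 1" using cc0 by (simp add: c0_def)
    have cN1: "real c \<ge> (2 * real K / (\<xi>/2))^2"
    proof -
      have "real N1 \<ge> (2 * real K / (\<xi>/2))^2" unfolding N1_def by linarith
      moreover have "N1 \<le> c" using cc0 by (simp add: c0_def)
      ultimately show ?thesis by linarith
    qed
    have cN1': "real c \<ge> 2 * real K / \<xi>"
    proof -
      have "real N1' \<ge> 2 * real K / \<xi>" unfolding N1'_def by linarith
      moreover have "N1' \<le> c" using cc0 by (simp add: c0_def)
      ultimately show ?thesis by linarith
    qed
    have cN2: "real c \<ge> (2 * real KQ / (3*\<xi>/4))^2"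
    proof -
      have "real N2 \<ge> (2 * real KQ / (3*\<xi>/4))^2" unfolding N2_def by linarith
      moreover have "N2 \<le> c" using cc0 by (simp add: c0_def)
      ultimately show ?thesis by linarith
    qed
    have cN3: "real c \<ge> ln (2 * Q + 1) / e"
    proof -
      have "real N3 \<ge> ln (2 * Q + 1) / e" unfolding N3_def by linarith
      moreover have "N3 \<le> c" using cc0 by (simp add: c0_def)
      ultimately show ?thesis by linarith
    qed
    have lnK: "real K * ln (real c + 1) \<le> (\<xi>/2) * real c"
      by (rule lin_beats_log[OF _ _ cN1]) (use \<xi> in auto)
    have K2: "real K \<le> (\<xi>/2) * real c" using cN1' \<xi> by (simp add: divide_le_eq mult.commute)
    have pw: "(exp 1 * (real c + 1)) ^ K = exp (real K * (1 + ln (real c + 1)))"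
    proof -
      have "exp 1 * (real c + 1) = exp (1 + ln (real c + 1))" by (simp add: exp_add)
      moreover have "exp (real K * (1 + ln (real c + 1))) = exp (1 + ln (real c + 1)) ^ K" by (rule exp_of_nat_mult)
      ultimately show ?thesis by simp
    qed
    have "exp (real c * entropy P) / (exp 1 * (real c + 1)) ^ card (UNIV::'x set) \<le> real (card (typ_class P c))"
      by (rule typ_class_lower[OF P Psum c1]) (use N in auto)
    moreover have "exp (real c * (entropy P - \<xi>)) \<le> exp (real c * entropy P) / (exp 1 * (real c + 1)) ^ card (UNIV::'x set)"
    proof -
      have "real K * (1 + ln (real c + 1)) \<le> real c * \<xi>" using lnK K2 by (simp add: algebra_simps)
      hence "exp (real K * (1 + ln (real c + 1))) \<le> exp (real c * \<xi>)" by simp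
      hence "exp (real c * entropy P) / exp (real c * \<xi>) \<le> exp (real c * entropy P) / (exp 1 * (real c + 1)) ^ K"
        unfolding pw by (intro divide_left_mono) auto
      moreover have "exp (real c * entropy P) / exp (real c * \<xi>) = exp (real c * (entropy P - \<xi>))"
        by (simp add: exp_diff[symmetric] algebra_simps)
      ultimately show ?thesis by (simp add: K_def)
    qed
    ultimately show "real (card (typ_class P c)) \<ge> exp (real c * (entropy P - \<xi>))" by linarith
    show "\<exists>Dec :: 'y list \<Rightarrow> ('x \<Rightarrow> 'y \<Rightarrow> real) set \<Rightarrow> 'x list set.
          \<forall>\<V>\<in>Vfam c.
            (\<forall>ys. length ys = c \<longrightarrow>
               Dec ys \<V> \<subseteq> typ_class P c \<and>
               (if Vset \<V> P ys \<delta> = {} then Dec ys \<V> = {}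
                else real (card (Dec ys \<V>)) \<le>
                  exp (real c * (Sup (cond_entropy P ` Vset \<V> P ys \<delta>) + \<xi>)))) \<and>
            (\<forall>xs\<in>typ_class P c. \<forall>ss::'s list. length ss = c \<longrightarrow>
               avg_channel W xs ss \<in> \<V> \<longrightarrow>
               list_err W (\<lambda>ys. Dec ys \<V>) xs ss \<le> exp (- real c * e))"
    proof (intro exI[of _ "\<lambda>ys \<V>. Dec l \<eta> P ys \<V>"] ballI conjI allI impI)
      fix \<V> assume VF: "\<V> \<in> Vfam c"
      have sV: "\<And>V. V \<in> \<V> \<Longrightarrow> stoch V" using Vst VF by blast
      fix ys :: "'y list" assume lys: "length ys = c"
      show "Dec l \<eta> P ys \<V> \<subseteq> typ_class P c" using lys by (auto simp: Dec_def)
      show "if Vset \<V> P ys \<delta> = {} then Dec l \<eta> P ys \<V> = {}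
                else real (card (Dec l \<eta> P ys \<V>)) \<le>
                  exp (real c * (Sup (cond_entropy P ` Vset \<V> P ys \<delta>) + \<xi>))"
      proof (cases "Vset \<V> P ys \<delta> = {}")
        case True
        have "Dec l \<eta> P ys \<V> = {}"
        proof (rule ccontr)
          assume "Dec l \<eta> P ys \<V> \<noteq> {}"
          then obtain xs where "xs \<in> Dec l \<eta> P ys \<V>" by blast
          then obtain V where "V \<in> \<V>" "tv_dist (emp_dist ys) (out_marg P V) < \<eta>" by (auto simp: Dec_def)
          hence "V \<in> Vset \<V> P ys \<delta>" using \<eta>\<delta> by (auto simp: Vset_def)
          thus False using True by blast
        qed
        thus ?thesis using True by simp
      next
        case False
        define M where "M = Sup (cond_entropy P ` Vset \<V> P ys \<delta>)"
        have "real (card (Dec l \<eta> P ys \<V>)) \<le> (real (length ys) + 1) ^ (card (UNIV::'x set) * card (UNIV::'y set))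
            * exp (real (length ys) * (M + \<xi>/4))"
          unfolding M_def by (rule Dec_card[OF sV P Psum l \<eta>\<delta> slack])
        also have "(real (length ys) + 1) ^ (card (UNIV::'x set) * card (UNIV::'y set)) \<le> exp (real c * (3 * \<xi> / 4))"
        proof -
          have "exp (real KQ * ln (real c + 1)) = exp (ln (real c + 1)) ^ KQ" by (rule exp_of_nat_mult)
          hence "(real c + 1) ^ KQ = exp (real KQ * ln (real c + 1))" by simp
          also have "real KQ * ln (real c + 1) \<le> (3*\<xi>/4) * real c"
            by (rule lin_beats_log[OF _ _ cN2]) (use \<xi> in auto)
          finally show ?thesis using lys by (simp add: KQ_def mult.commute)
        qed
        hence "(real (length ys) + 1) ^ (card (UNIV::'x set) * card (UNIV::'y set)) * exp (real (length ys) * (M + \<xi>/4))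
            \<le> exp (real c * (3 * \<xi> / 4)) * exp (real c * (M + \<xi>/4))"
          unfolding lys by (intro mult_right_mono) (use lys in auto)
        also have "\<dots> = exp (real c * (M + \<xi>))" by (simp add: exp_add[symmetric] algebra_simps)
        finally show ?thesis using False by (simp add: M_def)
      qed
    next
      fix \<V> assume VF: "\<V> \<in> Vfam c"
      have sV: "\<And>V. V \<in> \<V> \<Longrightarrow> stoch V" using Vst VF by blast
      fix xs assume xs: "xs \<in> typ_class P c"
      fix ss :: "'s list" assume lss: "length ss = c" and avg: "avg_channel W xs ss \<in> \<V>"
      have "list_err W (\<lambda>ys. Dec l \<eta> P ys \<V>) xs ss
         \<le> 2 * real (card (UNIV::'y set)) * exp (- (real c * (\<eta> / real (card (UNIV::'y set)))^2 / (4 * 1^2)))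
       + exp (- (real c * \<eta>^2 / (4 * (ln (real (card (UNIV::'y set)) / l) + 1)^2)))"
        by (rule err_bound[OF W P Psum l \<eta>0 \<eta>1' xs c1 avg sV[OF avg]])
      also have "\<dots> = 2 * Q * exp (- (real c * (\<eta>1^2 / 4))) + exp (- (real c * (\<eta>^2 / (4 * R^2))))"
        by (simp add: Q_def \<eta>1_def R_def Lg_def)
      also have "\<dots> \<le> 2 * Q * exp (- (real c * (2 * e))) + exp (- (real c * (2 * e)))"
      proof -
        have x1: "exp (- (real c * (\<eta>1^2 / 4))) \<le> exp (- (real c * (2 * e)))"
          using mult_left_mono[OF e1, of "real c"] by simp
        have x2: "exp (- (real c * (\<eta>^2 / (4 * R^2)))) \<le> exp (- (real c * (2 * e)))"
          using mult_left_mono[OF e2, of "real c"] by simp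
        show ?thesis using Q1 by (intro add_mono mult_left_mono x1 x2) auto
      qed
      also have "\<dots> = (2 * Q + 1) * exp (- (real c * e)) * exp (- (real c * e))"
        by (simp add: exp_add[symmetric] algebra_simps)
      also have "(2 * Q + 1) \<le> exp (real c * e)"
      proof -
        have "ln (2 * Q + 1) \<le> real c * e" using cN3 e0 by (simp add: divide_le_eq mult.commute)
        hence "exp (ln (2 * Q + 1)) \<le> exp (real c * e)" by simp
        thus ?thesis using Q1 by simp
      qed
      hence "(2 * Q + 1) * exp (- (real c * e)) * exp (- (real c * e)) \<le> exp (real c * e) * exp (- (real c * e)) * exp (- (real c * e))"
        by (intro mult_right_mono) auto
      also have "\<dots> = exp (- real c * e)" by (simp add: exp_add[symmetric])
      finally show "list_err W (\<lambda>ys. Dec l \<eta> P ys \<V>) xs ss \<le> exp (- real c * e)" .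
    qed
  qed
qed

theorem lemma4:
  fixes W :: "'x::finite \<Rightarrow> 's::finite \<Rightarrow> 'y::finite \<Rightarrow> real"
    and P :: "'x \<Rightarrow> real" and \<delta> v :: real
    and Vfam :: "nat \<Rightarrow> ('x \<Rightarrow> 'y \<Rightarrow> real) set set"
  assumes "avc W"
    and "\<forall>a. P a > 0" and "(\<Sum>a\<in>UNIV. P a) = 1"
    and "\<delta> > 0"
    and "\<forall>c\<ge>1. finite (Vfam c) \<and> real (card (Vfam c)) \<le> real c powr v"
    and "\<forall>c. \<forall>\<V>\<in>Vfam c. \<forall>V\<in>\<V>. stoch V"
  shows "\<exists>E1 :: real \<Rightarrow> real. (\<forall>\<xi>>0. E1 \<xi> > 0) \<and>
    (\<forall>\<xi>>0. \<exists>c0::nat. \<forall>c\<ge>c0. (\<forall>a. real c * P a \<in> \<nat>) \<longrightarrow>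
       real (card (typ_class P c)) \<ge> exp (real c * (entropy P - \<xi>)) \<and>
       (\<exists>Dec :: 'y list \<Rightarrow> ('x \<Rightarrow> 'y \<Rightarrow> real) set \<Rightarrow> 'x list set.
          \<forall>\<V>\<in>Vfam c.
            (\<forall>ys. length ys = c \<longrightarrow>
               Dec ys \<V> \<subseteq> typ_class P c \<and>
               (if Vset \<V> P ys \<delta> = {} then Dec ys \<V> = {}
                else real (card (Dec ys \<V>)) \<le>
                  exp (real c * (Sup (cond_entropy P ` Vset \<V> P ys \<delta>) + \<xi>)))) \<and>
            (\<forall>xs\<in>typ_class P c. \<forall>ss::'s list. length ss = c \<longrightarrow>
               avg_channel W xs ss \<in> \<V> \<longrightarrow>
               list_err W (\<lambda>ys. Dec ys \<V>) xs ss \<le> exp (- real c * E1 \<xi>))))"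
  by (rule choice_helper, rule main_xi[OF assms(1,2,3,4,6)])


end
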